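(* Suppose Assumptions (A), (B) and (C) hold, let $t\in(0,1/L_f]$ and $s\in\left(0,\frac{2}{L_\omega+\sigma}\right]$, and let $\{\mathbf x^k\}$ be generated by BiG-SAM from any $\mathbf x^0\in\mathbb R^n$. Then $\{\mathbf x^k\}$ converges to a point $\mathbf x^*\in X^*$ satisfying $\langle\nabla\omega(\mathbf x^* ),\mathbf x-\mathbf x^*\rangle\ge 0$ for all $\mathbf x\in X^*$; consequently $\mathbf x^*=\mathbf x^*_{mn}$, the unique minimizer of $\omega$ over $X^*$.
   Context: Assumption (A): $f:\mathbb R^n\to\mathbb R$ is convex and continuously differentiable with $L_f$-Lipschitz gradient; $g:\mathbb R^n\to(-\infty,\infty]$ is proper, lower semicontinuous and convex; the set $X^*$ of minimizers of $\varphi=f+g$ over $\mathbb R^n$ is nonempty. Assumption (B): $\omega:\mathbb R^n\to\mathbb R$ is $\sigma$-strongly convex ($\sigma>0$) and continuously differentiable with $L_\omega$-Lipschitz gradient. Assumption (C): $\{\alpha_k\}_{k\ge1}\subset(0,1]$, $\lim_k\alpha_k=0$, $\sum_k\alpha_k=\infty$, $\lim_k\alpha_{k+1}/\alpha_k=1$. For a proper lsc convex $h$, $\operatorname{prox}_h(\mathbf x)=\arg\min_{\mathbf u}\{h(\mathbf u)+\frac12\|\mathbf u-\mathbf x\|^2\}$. BiG-SAM: for $k=1,2,\dots$ set $\mathbf y^k=\operatorname{prox}_{tg}(\mathbf x^{k-1}-t\nabla f(\mathbf x^{k-1}))$, $\mathbf z^k=\mathbf x^{k-1}-s\nabla\omega(\mathbf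 x^{k-1})$, $\mathbf x^k=\alpha_k\mathbf z^k+(1-\alpha_k)\mathbf y^k$. *)

theory Defs
  imports "HOL-Analysis.Analysis"
begin

definition proper_fun :: "('a \<Rightarrow> ereal) \<Rightarrow> bool" where
  "proper_fun g \<longleftrightarrow> (\<forall>x. g x \<noteq> -\<infinity>) \<and> (\<exists>x. g x \<noteq> \<infinity>)"

definition lsc_fun :: "('a::topological_space \<Rightarrow> ereal) \<Rightarrow> bool" where
  "lsc_fun g \<longleftrightarrow> (\<forall>x. g x \<le> Liminf (at x) g)"

definition convex_ereal_fun :: "('a::real_vector \<Rightarrow> ereal) \<Rightarrow> bool" where
  "convex_ereal_fun g \<longleftrightarrow>
     (\<forall>x y a. 0 \<le> a \<and> a \<le> 1 \<longrightarrow>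
        g (a *\<^sub>R x + (1 - a) *\<^sub>R y) \<le> ereal a * g x + ereal (1 - a) * g y)"

definition strongly_convex_fun :: "real \<Rightarrow> ('a::real_normed_vector \<Rightarrow> real) \<Rightarrow> bool" where
  "strongly_convex_fun \<sigma> w \<longleftrightarrow>
     (\<forall>x y a. 0 \<le> a \<and> a \<le> 1 \<longrightarrow>
        w (a *\<^sub>R x + (1 - a) *\<^sub>R y)
          \<le> a * w x + (1 - a) * w y - \<sigma> / 2 * a * (1 - a) * (norm (x - y))\<^sup>2)"

definition prox :: "('a::real_normed_vector \<Rightarrow> ereal) \<Rightarrow> 'a \<Rightarrow> 'a" where
  "prox h x = (SOME u. \<forall>v. h u + ereal ((norm (u - x))\<^sup>2 / 2) \<le> h v + ereal ((norm (v - x))\<^sup>2 / 2))"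

end

theory Submission
  imports Defs
begin

lemma line_deriv:
  fixes \<phi> :: "'a::euclidean_space \<Rightarrow> real"
  assumes der: "\<And>y. (\<phi> has_derivative (\<lambda>h. G y \<bullet> h)) (at y)"
  shows "((\<lambda>\<tau>. \<phi> (y + \<tau> *\<^sub>R d)) has_real_derivative (G (y + \<tau> *\<^sub>R d) \<bullet> d)) (at \<tau>)"
proof -
  have l: "((\<lambda>\<tau>::real. y + \<tau> *\<^sub>R d) has_derivative (\<lambda>h. h *\<^sub>R d)) (at \<tau>)"
    by (auto intro!: derivative_eq_intros)
  have "((\<lambda>\<tau>. \<phi> (y + \<tau> *\<^sub>R d)) has_derivative (\<lambda>h. G (y + \<tau> *\<^sub>R d) \<bullet> (h *\<^sub>R d))) (at \<tau>)"
    using has_derivative_compose[OF l der] by (simp add: o_def)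
  moreover have "(\<lambda>h. G (y + \<tau> *\<^sub>R d) \<bullet> (h *\<^sub>R d)) = (*) (G (y + \<tau> *\<^sub>R d) \<bullet> d)"
    by (auto simp: mult.commute)
  ultimately show ?thesis by (simp add: has_field_derivative_def)
qed

lemma grad_ineq_convex:
  fixes \<phi> :: "'a::euclidean_space \<Rightarrow> real"
  assumes cv: "convex_on UNIV \<phi>" and der: "\<And>y. (\<phi> has_derivative (\<lambda>h. G y \<bullet> h)) (at y)"
  shows "\<phi> z \<ge> \<phi> y + G y \<bullet> (z - y)"
proof -
  define p where "p = (\<lambda>\<tau>. \<phi> (y + \<tau> *\<^sub>R (z - y)))"
  have "convex_on UNIV p"
  proof (rule convex_onI)
    fix t a b :: real assume t: "0 < t" "t < 1"
    have "p ((1 - t) *\<^sub>R a + t *\<^sub>R b) = \<phi> ((1 - t) *\<^sub>R (y + a *\<^sub>R (z - y)) + t *\<^sub>R (y + b *\<^sub>R (z - y)))"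
      unfolding p_def by (simp add: algebra_simps)
    also have "\<dots> \<le> (1 - t) * p a + t * p b"
      unfolding p_def using t by (intro convex_onD[OF cv]) auto
    finally show "p ((1 - t) *\<^sub>R a + t *\<^sub>R b) \<le> (1 - t) * p a + t * p b" .
  qed simp
  moreover have "(p has_real_derivative (G y \<bullet> (z - y))) (at 0 within UNIV)"
    using line_deriv[OF der, of y "z - y" 0] unfolding p_def by simp
  ultimately have "p 1 - p 0 \<ge> (G y \<bullet> (z - y)) * (1 - 0)"
    by (intro convex_on_imp_above_tangent) auto
  then show ?thesis unfolding p_def by simp
qed

lemma grad_ineq_mono:
  fixes \<phi> :: "'a::euclidean_space \<Rightarrow> real"
  assumes der: "\<And>y. (\<phi> has_derivative (\<lambda>h. G y \<bullet> h)) (at y)"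
    and mono: "\<And>y z. (G z - G y) \<bullet> (z - y) \<ge> 0"
  shows "\<phi> z \<ge> \<phi> y + G y \<bullet> (z - y)"
proof -
  define p where "p = (\<lambda>\<tau>. \<phi> (y + \<tau> *\<^sub>R (z - y)))"
  have "convex_on UNIV p"
  proof (rule convex_on_realI)
    show "\<And>x. x \<in> UNIV \<Longrightarrow> (p has_real_derivative (G (y + x *\<^sub>R (z - y)) \<bullet> (z - y))) (at x)"
      using line_deriv[OF der] unfolding p_def by blast
    fix a b :: real assume "a \<le> b"
    have "0 \<le> (G (y + b *\<^sub>R (z - y)) - G (y + a *\<^sub>R (z - y))) \<bullet> ((y + b *\<^sub>R (z - y)) - (y + a *\<^sub>R (z - y)))"
      by (rule mono)
    also have "\<dots> = (b - a) * ((G (y + b *\<^sub>R (z - y)) - G (y + a *\<^sub>R (z - y))) \<bullet> (z - y))"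
      by (simp add: algebra_simps inner_diff_right)
    finally show "G (y + a *\<^sub>R (z - y)) \<bullet> (z - y) \<le> G (y + b *\<^sub>R (z - y)) \<bullet> (z - y)"
      using \<open>a \<le> b\<close> by (cases "a = b") (auto simp: zero_le_mult_iff inner_diff_left)
  qed auto
  moreover have "(p has_real_derivative (G y \<bullet> (z - y))) (at 0 within UNIV)"
    using line_deriv[OF der, of y "z - y" 0] unfolding p_def by simp
  ultimately have "p 1 - p 0 \<ge> (G y \<bullet> (z - y)) * (1 - 0)"
    by (intro convex_on_imp_above_tangent) auto
  then show ?thesis unfolding p_def by simp
qed

lemma nsq_diff: "(norm (a - b))\<^sup>2 = (norm a)\<^sup>2 - 2 * (a \<bullet> b) + (norm (b::'a::real_inner))\<^sup>2"
  using dot_norm_neg[of a b] by simp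

lemma nsq_add: "(norm (a + b))\<^sup>2 = (norm a)\<^sup>2 + 2 * (a \<bullet> b) + (norm (b::'a::real_inner))\<^sup>2"
  using dot_norm[of a b] by simp

lemma descent:
  fixes \<phi> :: "'a::euclidean_space \<Rightarrow> real"
  assumes der: "\<And>y. (\<phi> has_derivative (\<lambda>h. G y \<bullet> h)) (at y)"
    and mono: "\<And>y z. ((M *\<^sub>R z - G z) - (M *\<^sub>R y - G y)) \<bullet> (z - y) \<ge> 0"
  shows "\<phi> z \<le> \<phi> y + G y \<bullet> (z - y) + M / 2 * (norm (z - y))\<^sup>2"
proof -
  define u where "u = (\<lambda>y. M / 2 * (y \<bullet> y) - \<phi> y)"
  have du: "(u has_derivative (\<lambda>h. (M *\<^sub>R y - G y) \<bullet> h)) (at y)" for y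
  proof -
    have "(u has_derivative (\<lambda>h. M / 2 * (h \<bullet> y + y \<bullet> h) - G y \<bullet> h)) (at y)"
    proof -
      have a: "((\<lambda>y. M / 2 * (y \<bullet> y)) has_derivative (\<lambda>h. M / 2 * (h \<bullet> y + y \<bullet> h))) (at y)"
        by (intro derivative_eq_intros) auto
      show ?thesis unfolding u_def using has_derivative_diff[OF a der] by simp
    qed
    moreover have "(\<lambda>h. M / 2 * (h \<bullet> y + y \<bullet> h) - G y \<bullet> h) = (\<lambda>h. (M *\<^sub>R y - G y) \<bullet> h)"
      by (auto simp: inner_diff_left inner_commute algebra_simps)
    ultimately show ?thesis by simp
  qed
  have "u z \<ge> u y + (M *\<^sub>R y - G y) \<bullet> (z - y)"
    by (rule grad_ineq_mono[OF du mono])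
  then have U: "M / 2 * (z \<bullet> z) - \<phi> z \<ge> M / 2 * (y \<bullet> y) - \<phi> y + M * (y \<bullet> (z - y)) - G y \<bullet> (z - y)"
    unfolding u_def by (simp add: inner_diff_left)
  have N: "(norm (z - y))\<^sup>2 = z \<bullet> z - 2 * (y \<bullet> z) + y \<bullet> y"
    by (simp add: power2_norm_eq_inner inner_diff_left inner_diff_right inner_commute)
  have I: "y \<bullet> (z - y) = y \<bullet> z - y \<bullet> y" by (simp add: inner_diff_right)
  have "M / 2 * (norm (z - y))\<^sup>2 = M / 2 * (z \<bullet> z) - M * (y \<bullet> z) + M / 2 * (y \<bullet> y)"
    unfolding N by (simp add: algebra_simps)
  moreover have "M / 2 * (z \<bullet> z) - \<phi> z \<ge> M / 2 * (y \<bullet> y) - \<phi> y + M * (y \<bullet> z) - M * (y \<bullet> y) - G y \<bullet> (z - y)"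
    using U unfolding I by (simp add: algebra_simps)
  ultimately show ?thesis by linarith
qed

lemma baillon_haddad:
  fixes \<phi> :: "'a::euclidean_space \<Rightarrow> real"
  assumes cv: "convex_on UNIV \<phi>" and der: "\<And>y. (\<phi> has_derivative (\<lambda>h. G y \<bullet> h)) (at y)"
    and M: "M > 0"
    and mono: "\<And>y z. ((M *\<^sub>R z - G z) - (M *\<^sub>R y - G y)) \<bullet> (z - y) \<ge> 0"
  shows "(norm (G x - G y))\<^sup>2 \<le> M * ((G x - G y) \<bullet> (x - y))"
proof -
  have key: "\<phi> a - \<phi> b \<le> G a \<bullet> (a - b) - (norm (G a - G b))\<^sup>2 / (2 * M)" for a b
  proof -
    define e where "e = G b - G a"
    define z where "z = b - (1 / M) *\<^sub>R e"
    have 1: "\<phi> a + G a \<bullet> (z - a) \<le> \<phi> z"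
      using grad_ineq_convex[OF cv der] by simp
    have 2: "\<phi> z \<le> \<phi> b + G b \<bullet> (z - b) + M / 2 * (norm (z - b))\<^sup>2"
      by (rule descent[OF der mono])
    have 3: "G a \<bullet> (z - a) = G a \<bullet> (b - a) - (1 / M) * (G a \<bullet> e)"
      by (simp add: z_def inner_diff_right algebra_simps)
    have 4: "G b \<bullet> (z - b) = - (1 / M) * (G b \<bullet> e)"
      by (simp add: z_def)
    have 5: "M / 2 * (norm (z - b))\<^sup>2 = (norm e)\<^sup>2 / (2 * M)"
      using M by (simp add: z_def power2_eq_square)
    have 6: "G b \<bullet> e - G a \<bullet> e = (norm e)\<^sup>2"
      by (simp add: e_def power2_norm_eq_inner inner_diff_left)
    have 7: "(norm (G a - G b))\<^sup>2 = (norm e)\<^sup>2"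
      by (simp add: e_def norm_minus_commute)
    have 8: "G a \<bullet> (b - a) = - (G a \<bullet> (a - b))"
      by (simp add: inner_diff_right)
    have "\<phi> a - \<phi> b \<le> G a \<bullet> (a - b) + (1 / M) * (G a \<bullet> e - G b \<bullet> e) + (norm e)\<^sup>2 / (2 * M)"
      using 1 2 3 4 5 8 by (simp add: algebra_simps)
    also have "\<dots> = G a \<bullet> (a - b) - (norm e)\<^sup>2 / (2 * M)"
      using 6 M by (simp add: field_simps)
    finally show ?thesis using 7 by simp
  qed
  have "0 \<le> (G x \<bullet> (x - y) + G y \<bullet> (y - x)) - (norm (G x - G y))\<^sup>2 / M"
    using key[of x y] key[of y x] M by (simp add: norm_minus_commute field_simps)
  moreover have "G x \<bullet> (x - y) + G y \<bullet> (y - x) = (G x - G y) \<bullet> (x - y)"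
    by (simp add: inner_diff_left inner_diff_right algebra_simps)
  ultimately show ?thesis using M by (simp add: field_simps)
qed

lemma grad_mono_convex:
  fixes \<phi> :: "'a::euclidean_space \<Rightarrow> real"
  assumes cv: "convex_on UNIV \<phi>" and der: "\<And>y. (\<phi> has_derivative (\<lambda>h. G y \<bullet> h)) (at y)"
  shows "(G x - G y) \<bullet> (x - y) \<ge> 0"
proof -
  have "\<phi> x \<ge> \<phi> y + G y \<bullet> (x - y)" "\<phi> y \<ge> \<phi> x + G x \<bullet> (y - x)"
    using grad_ineq_convex[OF cv der] by auto
  moreover have "G x \<bullet> (y - x) = - (G x \<bullet> (x - y))" by (simp add: inner_diff_right)
  ultimately show ?thesis by (simp add: inner_diff_left)
qed

lemma lip_mono:
  fixes G :: "'a::euclidean_space \<Rightarrow> 'a"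
  assumes lip: "\<And>y z. norm (G y - G z) \<le> L * norm (y - z)" and hML: "M \<ge> L"
  shows "((M *\<^sub>R z - G z) - (M *\<^sub>R y - G y)) \<bullet> (z - y) \<ge> 0"
proof -
  have "(G z - G y) \<bullet> (z - y) \<le> norm (G z - G y) * norm (z - y)"
    by (rule norm_cauchy_schwarz)
  also have "\<dots> \<le> L * norm (z - y) * norm (z - y)"
    by (rule mult_right_mono[OF lip]) simp
  also have "\<dots> \<le> M * norm (z - y) * norm (z - y)"
    using hML by (intro mult_right_mono) auto
  finally have "(G z - G y) \<bullet> (z - y) \<le> M * ((z - y) \<bullet> (z - y))"
    by (simp add: power2_norm_eq_inner[symmetric] power2_eq_square mult.assoc)
  moreover have E: "((M *\<^sub>R z - G z) - (M *\<^sub>R y - G y)) = M *\<^sub>R (z - y) - (G z - G y)"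
    by (simp add: algebra_simps)
  moreover have "(M *\<^sub>R (z - y) - (G z - G y)) \<bullet> (z - y) = M * ((z - y) \<bullet> (z - y)) - (G z - G y) \<bullet> (z - y)"
    by (simp add: inner_diff_left)
  ultimately show ?thesis unfolding E by linarith
qed

lemma grad_step_nonexp:
  fixes f :: "'a::euclidean_space \<Rightarrow> real"
  assumes cv: "convex_on UNIV f" and der: "\<And>y. (f has_derivative (\<lambda>h. G y \<bullet> h)) (at y)"
    and L: "L > 0" and lip: "\<And>y z. norm (G y - G z) \<le> L * norm (y - z)"
    and t: "0 \<le> t" "t * L \<le> 2"
  shows "norm ((x - t *\<^sub>R G x) - (y - t *\<^sub>R G y)) \<le> norm (x - y)"
proof -
  define d where "d = x - y"
  define D where "D = G x - G y"
  have bh: "(norm D)\<^sup>2 \<le> L * (D \<bullet> d)"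
    unfolding D_def d_def by (rule baillon_haddad[OF cv der L lip_mono[OF lip]]) simp
  have pos: "D \<bullet> d \<ge> 0" using bh L
    by (smt (verit) mult_nonneg_nonneg zero_le_power2 zero_le_mult_iff)
  have eq: "(x - t *\<^sub>R G x) - (y - t *\<^sub>R G y) = d - t *\<^sub>R D"
    by (simp add: d_def D_def algebra_simps)
  have "(norm (d - t *\<^sub>R D))\<^sup>2 = (norm d)\<^sup>2 - 2 * t * (D \<bullet> d) + t\<^sup>2 * (norm D)\<^sup>2"
    by (simp add: nsq_diff power_mult_distrib inner_commute)
  also have "t\<^sup>2 * (norm D)\<^sup>2 \<le> t\<^sup>2 * (L * (D \<bullet> d))"
    using bh by (intro mult_left_mono) auto
  also have "t\<^sup>2 * (L * (D \<bullet> d)) = t * (t * L) * (D \<bullet> d)" by (simp add: power2_eq_square)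
  also have "\<dots> \<le> t * 2 * (D \<bullet> d)"
    using t pos by (intro mult_right_mono mult_left_mono) auto
  finally have "(norm (d - t *\<^sub>R D))\<^sup>2 \<le> (norm d)\<^sup>2" by simp
  then show ?thesis unfolding eq d_def by (simp add: power2_le_iff_abs_le)
qed

lemma aux_ring: "(s::real) / 2 * ((1 - t) * a + t * b - (1 - t) * t * n) = (1 - t) * (s / 2 * a) + t * (s / 2 * b) - s / 2 * (1 - t) * t * n"
  by (simp add: field_simps)

lemma sc_phi_convex:
  fixes \<omega> :: "'a::euclidean_space \<Rightarrow> real"
  assumes sc: "strongly_convex_fun \<sigma> \<omega>"
  shows "convex_on UNIV (\<lambda>y. \<omega> y - \<sigma> / 2 * (y \<bullet> y))"
proof (rule convex_onI)
  fix t :: real and x y :: 'a assume t: "0 < t" "t < 1"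
  have 1: "\<omega> ((1 - t) *\<^sub>R x + t *\<^sub>R y) \<le> (1 - t) * \<omega> x + t * \<omega> y - \<sigma> / 2 * (1 - t) * t * (norm (x - y))\<^sup>2"
  proof -
    have "\<omega> ((1 - t) *\<^sub>R x + (1 - (1 - t)) *\<^sub>R y) \<le> (1 - t) * \<omega> x + (1 - (1 - t)) * \<omega> y - \<sigma> / 2 * (1 - t) * (1 - (1 - t)) * (norm (x - y))\<^sup>2"
    proof -
      have "\<forall>x y a. 0 \<le> a \<and> a \<le> 1 \<longrightarrow> \<omega> (a *\<^sub>R x + (1 - a) *\<^sub>R y) \<le> a * \<omega> x + (1 - a) * \<omega> y - \<sigma> / 2 * a * (1 - a) * (norm (x - y))\<^sup>2"
        using sc unfolding strongly_convex_fun_def by blast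
      from this[rule_format, of "1 - t" x y] show ?thesis using t by simp
    qed
    then show ?thesis by simp
  qed
  have a: "(norm ((1 - t) *\<^sub>R x + t *\<^sub>R y))\<^sup>2 = (1 - t)\<^sup>2 * (norm x)\<^sup>2 + 2 * ((1 - t) * t) * (x \<bullet> y) + t\<^sup>2 * (norm y)\<^sup>2"
    by (simp add: nsq_add power_mult_distrib)
  have b: "(norm (x - y))\<^sup>2 = (norm x)\<^sup>2 - 2 * (x \<bullet> y) + (norm y)\<^sup>2" by (rule nsq_diff)
  have 2: "((1 - t) *\<^sub>R x + t *\<^sub>R y) \<bullet> ((1 - t) *\<^sub>R x + t *\<^sub>R y) = (1 - t) * (x \<bullet> x) + t * (y \<bullet> y) - (1 - t) * t * (norm (x - y))\<^sup>2"
    unfolding power2_norm_eq_inner[symmetric] a b by (simp add: power2_eq_square) algebra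
  show "\<omega> ((1 - t) *\<^sub>R x + t *\<^sub>R y) - \<sigma> / 2 * (((1 - t) *\<^sub>R x + t *\<^sub>R y) \<bullet> ((1 - t) *\<^sub>R x + t *\<^sub>R y))
        \<le> (1 - t) * (\<omega> x - \<sigma> / 2 * (x \<bullet> x)) + t * (\<omega> y - \<sigma> / 2 * (y \<bullet> y))"
  proof -
    have "\<sigma> / 2 * ((1 - t) * (x \<bullet> x) + t * (y \<bullet> y) - (1 - t) * t * (norm (x - y))\<^sup>2)
       = (1 - t) * (\<sigma> / 2 * (x \<bullet> x)) + t * (\<sigma> / 2 * (y \<bullet> y)) - \<sigma> / 2 * (1 - t) * t * (norm (x - y))\<^sup>2"
      by (rule aux_ring)
    moreover have "(1 - t) * (\<omega> x - \<sigma> / 2 * (x \<bullet> x)) = (1 - t) * \<omega> x - (1 - t) * (\<sigma> / 2 * (x \<bullet> x))"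
      "t * (\<omega> y - \<sigma> / 2 * (y \<bullet> y)) = t * \<omega> y - t * (\<sigma> / 2 * (y \<bullet> y))"
      by (rule right_diff_distrib)+
    ultimately show ?thesis using 1 2 by (smt (verit))
  qed
qed simp

lemma omega_contract:
  fixes \<omega> :: "'a::euclidean_space \<Rightarrow> real"
  assumes sc: "strongly_convex_fun \<sigma> \<omega>"
    and der: "\<And>y. (\<omega> has_derivative (\<lambda>h. G y \<bullet> h)) (at y)"
    and \<sigma>: "\<sigma> > 0" and L: "L > 0" and lip: "\<And>y z. norm (G y - G z) \<le> L * norm (y - z)"
    and s: "0 < s" "s \<le> 2 / (L + \<sigma>)"
  shows "norm ((x - s *\<^sub>R G x) - (y - s *\<^sub>R G y)) \<le> \<bar>1 - s * \<sigma>\<bar> * norm (x - y)"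
proof -
  define \<phi> where "\<phi> = (\<lambda>y. \<omega> y - \<sigma> / 2 * (y \<bullet> y))"
  define H where "H = (\<lambda>y. G y - \<sigma> *\<^sub>R y)"
  have cv: "convex_on UNIV \<phi>" unfolding \<phi>_def by (rule sc_phi_convex[OF sc])
  have dH: "(\<phi> has_derivative (\<lambda>h. H y \<bullet> h)) (at y)" for y
  proof -
    have a: "((\<lambda>y. \<sigma> / 2 * (y \<bullet> y)) has_derivative (\<lambda>h. \<sigma> / 2 * (h \<bullet> y + y \<bullet> h))) (at y)"
      by (intro derivative_eq_intros) auto
    have "(\<phi> has_derivative (\<lambda>h. G y \<bullet> h - \<sigma> / 2 * (h \<bullet> y + y \<bullet> h))) (at y)"
      unfolding \<phi>_def using has_derivative_diff[OF der a] by simp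
    moreover have "(\<lambda>h. G y \<bullet> h - \<sigma> / 2 * (h \<bullet> y + y \<bullet> h)) = (\<lambda>h. H y \<bullet> h)"
      by (auto simp: H_def inner_diff_left inner_commute algebra_simps)
    ultimately show ?thesis by simp
  qed
  define d where "d = x - y"
  define e where "e = H x - H y"
  have bh: "(norm e)\<^sup>2 \<le> M * (e \<bullet> d)" if M: "M > 0" "M \<ge> L - \<sigma>" for M
    unfolding e_def d_def
  proof (rule baillon_haddad[OF cv dH M(1)])
    fix y z :: 'a
    have "((M + \<sigma>) *\<^sub>R z - G z - ((M + \<sigma>) *\<^sub>R y - G y)) \<bullet> (z - y) \<ge> 0"
      by (rule lip_mono[OF lip]) (use M in auto)
    moreover have "(M + \<sigma>) *\<^sub>R z - G z - ((M + \<sigma>) *\<^sub>R y - G y) = M *\<^sub>R z - H z - (M *\<^sub>R y - H y)"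
      by (simp add: H_def algebra_simps)
    ultimately show "0 \<le> (M *\<^sub>R z - H z - (M *\<^sub>R y - H y)) \<bullet> (z - y)" by simp
  qed
  have ed: "e \<bullet> d \<ge> 0" unfolding e_def d_def by (rule grad_mono_convex[OF cv dH])
  have key: "s\<^sup>2 * (norm e)\<^sup>2 \<le> s * (2 - 2 * s * \<sigma>) * (e \<bullet> d)"
  proof (cases "L - \<sigma> > 0")
    case True
    have "s\<^sup>2 * (norm e)\<^sup>2 \<le> s\<^sup>2 * ((L - \<sigma>) * (e \<bullet> d))"
      using bh[of "L - \<sigma>"] True by (intro mult_left_mono) auto
    also have "\<dots> = s * (s * (L - \<sigma>)) * (e \<bullet> d)" by (simp add: power2_eq_square)
    also have "\<dots> \<le> s * (2 - 2 * s * \<sigma>) * (e \<bullet> d)"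
    proof -
      have "s * (L + \<sigma>) \<le> 2" using s L \<sigma> by (simp add: field_simps)
      then have "s * (L - \<sigma>) \<le> 2 - 2 * s * \<sigma>" by (simp add: algebra_simps)
      then show ?thesis using s ed by (intro mult_right_mono mult_left_mono) auto
    qed
    finally show ?thesis .
  next
    case False
    have "(norm e)\<^sup>2 \<le> 0"
    proof (rule ccontr)
      assume "\<not> (norm e)\<^sup>2 \<le> 0"
      then have p: "(norm e)\<^sup>2 > 0" by simp
      define M where "M = (norm e)\<^sup>2 / (2 * (e \<bullet> d) + 1)"
      have Mp: "M > 0" unfolding M_def using p ed by simp
      have "(norm e)\<^sup>2 \<le> M * (e \<bullet> d)" using bh[of M] Mp False by auto
      also have "M * (e \<bullet> d) = (norm e)\<^sup>2 * ((e \<bullet> d) / (2 * (e \<bullet> d) + 1))"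
        unfolding M_def by simp
      also have "\<dots> < (norm e)\<^sup>2 * 1"
        using p ed by (intro mult_strict_left_mono) (auto simp: field_simps)
      finally show False by simp
    qed
    then have "e = 0" by simp
    then show ?thesis using ed s by simp
  qed
  have eq: "(x - s *\<^sub>R G x) - (y - s *\<^sub>R G y) = (1 - s * \<sigma>) *\<^sub>R d - s *\<^sub>R e"
    by (simp add: d_def e_def H_def algebra_simps)
  have "(norm ((1 - s * \<sigma>) *\<^sub>R d - s *\<^sub>R e))\<^sup>2
      = (1 - s * \<sigma>)\<^sup>2 * (norm d)\<^sup>2 - 2 * (1 - s * \<sigma>) * s * (e \<bullet> d) + s\<^sup>2 * (norm e)\<^sup>2"
    by (simp add: nsq_diff power_mult_distrib inner_commute)
  also have "\<dots> \<le> (1 - s * \<sigma>)\<^sup>2 * (norm d)\<^sup>2"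
    using key by (simp add: algebra_simps)
  finally have "(norm ((1 - s * \<sigma>) *\<^sub>R d - s *\<^sub>R e))\<^sup>2 \<le> (\<bar>1 - s * \<sigma>\<bar> * norm d)\<^sup>2"
    by (simp add: power_mult_distrib)
  then show ?thesis unfolding eq d_def
    by (meson abs_ge_zero mult_nonneg_nonneg norm_ge_zero power2_le_imp_le)
qed

lemma limit_tau:
  fixes a b c :: real
  assumes "\<And>\<tau>. 0 < \<tau> \<Longrightarrow> \<tau> \<le> 1 \<Longrightarrow> a \<le> b + c * \<tau>"
  shows "a \<le> b"
proof (rule ccontr)
  assume "\<not> a \<le> b"
  define \<tau> where "\<tau> = min 1 ((a - b) / (2 * (\<bar>c\<bar> + 1)))"
  have p: "0 < \<tau>" "\<tau> \<le> 1" using \<open>\<not> a \<le> b\<close> by (auto simp: \<tau>_def)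
  have "c * \<tau> \<le> \<bar>c\<bar> * \<tau>" using p by (simp add: mult_right_mono)
  also have "\<dots> \<le> (\<bar>c\<bar> + 1) * ((a - b) / (2 * (\<bar>c\<bar> + 1)))"
    using \<open>\<not> a \<le> b\<close> by (intro mult_mono) (auto simp: \<tau>_def)
  also have "\<dots> = (a - b) / 2" by (simp add: field_simps)
  finally show False using assms[OF p] \<open>\<not> a \<le> b\<close> by (simp add: field_simps)
qed

lemma aux2: "(P::real) + n / 2 \<le> t * ((1 - \<tau>) * P' + \<tau> * Gv) + (n + 2 * (\<tau> * A) + \<tau>\<^sup>2 * N) / 2 \<Longrightarrow> P = t * P'
  \<Longrightarrow> \<tau> * (t * P') \<le> \<tau> * (t * Gv + A + N / 2 * \<tau>)"
  by (simp add: algebra_simps power2_eq_square add_divide_distrib)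

locale proxsetup =
  fixes g :: "'a::euclidean_space \<Rightarrow> ereal" and t :: real
  assumes proper: "proper_fun g" and lsc: "lsc_fun g" and conv: "convex_ereal_fun g"
    and tpos: "t > 0"
begin

definition G where "G u = real_of_ereal (g u)"
definition Dom where "Dom = {u. g u \<noteq> \<infinity>}"

lemma not_minf: "g u \<noteq> -\<infinity>" using proper unfolding proper_fun_def by auto

lemma Dom_ne: "Dom \<noteq> {}" using proper unfolding proper_fun_def Dom_def by auto

lemma g_eq: "u \<in> Dom \<Longrightarrow> g u = ereal (G u)"
  using not_minf[of u] unfolding Dom_def G_def by (cases "g u") auto

lemma G_conv:
  assumes "u \<in> Dom" "v \<in> Dom" "0 \<le> a" "a \<le> 1"
  shows "a *\<^sub>R u + (1 - a) *\<^sub>R v \<in> Dom \<and> G (a *\<^sub>R u + (1 - a) *\<^sub>R v) \<le> a * G u + (1 - a) * G v"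
proof -
  have "g (a *\<^sub>R u + (1 - a) *\<^sub>R v) \<le> ereal a * g u + ereal (1 - a) * g v"
    using conv assms unfolding convex_ereal_fun_def by blast
  also have "\<dots> = ereal (a * G u + (1 - a) * G v)"
    using g_eq[OF assms(1)] g_eq[OF assms(2)] by simp
  finally have le: "g (a *\<^sub>R u + (1 - a) *\<^sub>R v) \<le> ereal (a * G u + (1 - a) * G v)" .
  then have "a *\<^sub>R u + (1 - a) *\<^sub>R v \<in> Dom" unfolding Dom_def by auto
  moreover from this le show ?thesis using g_eq by auto
qed

lemma G_conv':
  assumes "u \<in> Dom" "v \<in> Dom" "0 \<le> \<tau>" "\<tau> \<le> 1"
  shows "u + \<tau> *\<^sub>R (v - u) \<in> Dom \<and> G (u + \<tau> *\<^sub>R (v - u)) \<le> (1 - \<tau>) * G u + \<tau> * G v"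
proof -
  have "u + \<tau> *\<^sub>R (v - u) = \<tau> *\<^sub>R v + (1 - \<tau>) *\<^sub>R u" by (simp add: algebra_simps)
  then show ?thesis using G_conv[OF assms(2,1,3,4)] by (simp add: algebra_simps)
qed

lemma lsc_near:
  assumes "ereal y < g p"
  shows "\<exists>\<delta>>0. \<forall>w. dist w p < \<delta> \<longrightarrow> ereal y < g w"
proof -
  have "ereal y < Liminf (at p) g" using lsc assms unfolding lsc_fun_def
    using order_less_le_trans by blast
  then have "eventually (\<lambda>w. ereal y < g w) (at p)" by (rule less_LiminfD)
  then obtain \<delta> where "\<delta> > 0" "\<forall>w. w \<noteq> p \<and> dist w p < \<delta> \<longrightarrow> ereal y < g w"
    unfolding eventually_at by auto
  then show ?thesis using assms by (metis)
qed

lemma prox_vi: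
  assumes p: "p \<in> Dom" and min: "\<And>v. v \<in> Dom \<Longrightarrow> t * G p + (norm (p - z))\<^sup>2 / 2 \<le> t * G v + (norm (v - z))\<^sup>2 / 2"
    and v: "v \<in> Dom"
  shows "t * G v \<ge> t * G p + (z - p) \<bullet> (v - p)"
proof -
  have "t * G p \<le> t * G v + (p - z) \<bullet> (v - p) + (norm (v - p))\<^sup>2 / 2 * \<tau>" if \<tau>: "0 < \<tau>" "\<tau> \<le> 1" for \<tau>
  proof -
    define w where "w = p + \<tau> *\<^sub>R (v - p)"
    have w: "w \<in> Dom" "G w \<le> (1 - \<tau>) * G p + \<tau> * G v"
      using G_conv'[OF p v] \<tau> unfolding w_def by auto
    have m: "t * G p + (norm (p - z))\<^sup>2 / 2 \<le> t * G w + (norm (w - z))\<^sup>2 / 2" by (rule min[OF w(1)])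
    have m2: "t * G w \<le> t * ((1 - \<tau>) * G p + \<tau> * G v)" using w(2) tpos by simp
    have "(norm (w - z))\<^sup>2 = (norm ((p - z) + \<tau> *\<^sub>R (v - p)))\<^sup>2" unfolding w_def by (simp add: algebra_simps)
    also have "\<dots> = (norm (p - z))\<^sup>2 + 2 * (\<tau> * ((p - z) \<bullet> (v - p))) + \<tau>\<^sup>2 * (norm (v - p))\<^sup>2"
      by (simp add: nsq_add power_mult_distrib)
    finally have m3: "(norm (w - z))\<^sup>2 = \<dots>" .
    have "t * G p + (norm (p - z))\<^sup>2 / 2 \<le> t * ((1 - \<tau>) * G p + \<tau> * G v) + ((norm (p - z))\<^sup>2 + 2 * (\<tau> * ((p - z) \<bullet> (v - p))) + \<tau>\<^sup>2 * (norm (v - p))\<^sup>2) / 2"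
      using m m2 m3 by (simp add: field_simps)
    then have "\<tau> * (t * G p) \<le> \<tau> * (t * G v + (p - z) \<bullet> (v - p) + (norm (v - p))\<^sup>2 / 2 * \<tau>)"
      by (rule aux2) simp
    then show ?thesis using \<tau> by simp
  qed
  then have "t * G p \<le> t * G v + (p - z) \<bullet> (v - p)" by (rule limit_tau)
  moreover have "(p - z) \<bullet> (v - p) = - ((z - p) \<bullet> (v - p))" by (simp add: inner_diff_left)
  ultimately show ?thesis by simp
qed

end

lemma lin3: "(X::real) < B \<Longrightarrow> 2 * (\<bar>B\<bar> + 1) \<le> X \<Longrightarrow> False"
  by (cases "B \<ge> 0") auto

context proxsetup begin

lemma prox_exists:
  assumes minor: "\<And>u. ereal (c + q \<bullet> u) \<le> g u"
  shows "\<exists>p\<in>Dom. \<forall>v\<in>Dom. t * G p + (norm (p - z))\<^sup>2 / 2 \<le> t * G v + (norm (v - z))\<^sup>2 / 2"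
proof -
  define \<psi> where "\<psi> u = t * G u + (norm (u - z))\<^sup>2 / 2" for u
  define K where "K = t * c + t * (q \<bullet> z) - (t * norm q)\<^sup>2 / 2"
  have Gmin: "G u \<ge> c + q \<bullet> u" if "u \<in> Dom" for u
    using minor[of u] g_eq[OF that] by simp
  have lowbd: "\<psi> u \<ge> t * c + t * (q \<bullet> z) - t * norm q * norm (u - z) + (norm (u - z))\<^sup>2 / 2"
    if "u \<in> Dom" for u
  proof -
    have "q \<bullet> u = q \<bullet> z + q \<bullet> (u - z)" by (simp add: inner_diff_right)
    moreover have "q \<bullet> (u - z) \<ge> - (norm q * norm (u - z))"
      using norm_cauchy_schwarz[of "-q" "u - z"] by simp
    ultimately have "G u \<ge> c + q \<bullet> z - norm q * norm (u - z)" using Gmin[OF that] by linarith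
    then have "t * G u \<ge> t * (c + q \<bullet> z - norm q * norm (u - z))" using tpos by (intro mult_left_mono) auto
    then show ?thesis unfolding \<psi>_def by (simp add: algebra_simps)
  qed
  have Kbd: "\<psi> u \<ge> K" if "u \<in> Dom" for u
  proof -
    have "0 \<le> (norm (u - z) - t * norm q)\<^sup>2 / 2" by simp
    then have "- t * norm q * norm (u - z) + (norm (u - z))\<^sup>2 / 2 \<ge> - (t * norm q)\<^sup>2 / 2"
      by (simp add: power2_eq_square algebra_simps field_simps)
    then show ?thesis using lowbd[OF that] unfolding K_def by linarith
  qed
  obtain v0 where v0: "v0 \<in> Dom" using Dom_ne by auto
  define m where "m = Inf (\<psi> ` Dom)"
  have bdd: "bdd_below (\<psi> ` Dom)" by (rule bdd_belowI[where m=K]) (auto simp: Kbd)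
  have mle: "m \<le> \<psi> v" if "v \<in> Dom" for v unfolding m_def using bdd that by (simp add: cInf_lower)
  have "\<exists>u. u \<in> Dom \<and> \<psi> u < m + 1 / (Suc n)" for n :: nat
  proof -
    have "Inf (\<psi> ` Dom) < m + 1 / Suc n" unfolding m_def by simp
    then obtain y where "y \<in> \<psi> ` Dom" "y < m + 1 / Suc n"
      using cInf_lessD[of "\<psi> ` Dom"] Dom_ne by blast
    then show ?thesis by auto
  qed
  then obtain u where u: "\<And>n. u n \<in> Dom" "\<And>n. \<psi> (u n) < m + 1 / Suc n" by metis
  define a where "a = t * norm q"
  define B' where "B' = m + 1 - t * c - t * (q \<bullet> z)"
  have rb: "norm (u n - z) \<le> 2 * a + 2 * \<bar>B'\<bar> + 2" for n
  proof (rule ccontr)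
    define r where "r = norm (u n - z)"
    assume "\<not> ?thesis"
    then have r: "r > 2 * a + 2 * \<bar>B'\<bar> + 2" unfolding r_def by simp
    have a0: "a \<ge> 0" unfolding a_def using tpos by simp
    have "1 / real (Suc n) \<le> 1" by simp
    then have "\<psi> (u n) < m + 1" using u(2)[of n] by linarith
    then have "r\<^sup>2 / 2 - a * r < B'" using lowbd[OF u(1)[of n]] unfolding r_def a_def B'_def by (simp add: algebra_simps)
    moreover have "r\<^sup>2 / 2 - a * r = r * (r / 2 - a)" by (simp add: power2_eq_square algebra_simps)
    moreover have "r * (r / 2 - a) \<ge> 2 * (\<bar>B'\<bar> + 1)"
    proof -
      have "r / 2 - a \<ge> \<bar>B'\<bar> + 1" using r by simp
      moreover have "r \<ge> 2" using r a0 by linarith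
      ultimately have "r * (r / 2 - a) \<ge> 2 * (\<bar>B'\<bar> + 1)" by (intro mult_mono) auto
      then show ?thesis .
    qed
    ultimately have "r * (r / 2 - a) < B'" "2 * (\<bar>B'\<bar> + 1) \<le> r * (r / 2 - a)" by auto
    then show False using lin3 by blast
  qed
  have "bounded (range u)"
    unfolding bounded_iff
    by (rule exI[of _ "norm z + (2 * a + 2 * \<bar>B'\<bar> + 2)"])
       (auto intro: order_trans[OF norm_triangle_sub[of _ z]] simp: rb add_mono)
  then obtain p r where r: "strict_mono r" "(u \<circ> r) \<longlonglongrightarrow> p"
    using bounded_imp_convergent_subsequence by blast
  define w where "w = (m - (norm (p - z))\<^sup>2 / 2) / t"
  have yle: "y \<le> w" if y: "ereal y < g p" for y
  proof -
    obtain \<delta> where \<delta>: "\<delta> > 0" "\<And>v. dist v p < \<delta> \<Longrightarrow> ereal y < g v" using lsc_near[OF y] by blast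
    have ev: "eventually (\<lambda>n. dist (u (r n)) p < \<delta>) sequentially"
      using r(2) \<delta>(1) unfolding tendsto_iff o_def by blast
    have ev2: "eventually (\<lambda>n. t * y + (norm (u (r n) - z))\<^sup>2 / 2 \<le> m + 1 / Suc n) sequentially"
      using ev
    proof eventually_elim
      case (elim n)
      have "ereal y < g (u (r n))" using \<delta>(2)[OF elim] .
      then have "y < G (u (r n))" using g_eq[OF u(1)] by simp
      then have "t * y + (norm (u (r n) - z))\<^sup>2 / 2 \<le> \<psi> (u (r n))" unfolding \<psi>_def using tpos by simp
      also have "\<dots> < m + 1 / Suc (r n)" by (rule u(2))
      also have "1 / real (Suc (r n)) \<le> 1 / Suc n"
        using seq_suble[OF r(1), of n] by (simp add: frac_le)
      finally show ?case by simp
    qed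
    have l1: "(\<lambda>n. t * y + (norm (u (r n) - z))\<^sup>2 / 2) \<longlonglongrightarrow> t * y + (norm (p - z))\<^sup>2 / 2"
      using r(2) unfolding o_def by (intro tendsto_intros) auto
    have l2: "(\<lambda>n. m + 1 / real (Suc n)) \<longlonglongrightarrow> m + 0"
      by (intro tendsto_intros LIMSEQ_inverse_real_of_nat[unfolded inverse_eq_divide])
    have "t * y + (norm (p - z))\<^sup>2 / 2 \<le> m + 0"
      by (rule tendsto_le[OF _ l2 l1 ev2]) simp
    then show ?thesis unfolding w_def using tpos by (simp add: field_simps)
  qed
  have gp: "g p \<le> ereal w"
  proof (rule ccontr)
    assume "\<not> g p \<le> ereal w"
    then have "ereal w < g p" by simp
    then obtain y where "ereal w < ereal y" "ereal y < g p" using ereal_dense2 by blast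
    then show False using yle by force
  qed
  then have pD: "p \<in> Dom" unfolding Dom_def by auto
  have "G p \<le> w" using gp g_eq[OF pD] by simp
  then have "\<psi> p \<le> m" unfolding \<psi>_def w_def using tpos by (simp add: field_simps)
  then show ?thesis using pD mle unfolding \<psi>_def by (metis order_trans)
qed

end

context proxsetup begin

lemma prox_char:
  assumes minor: "\<And>u. ereal (c + q \<bullet> u) \<le> g u"
  shows "prox (\<lambda>u. ereal t * g u) z \<in> Dom \<and> (let p = prox (\<lambda>u. ereal t * g u) z in (\<forall>v\<in>Dom. t * G p + (norm (p - z))\<^sup>2 / 2 \<le> t * G v + (norm (v - z))\<^sup>2 / 2))"
proof -
  define p where "p = prox (\<lambda>u. ereal t * g u) z"
  have "p \<in> Dom \<and> (\<forall>v\<in>Dom. t * G p + (norm (p - z))\<^sup>2 / 2 \<le> t * G v + (norm (v - z))\<^sup>2 / 2)"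
proof -
  define Q where "Q u \<longleftrightarrow> (\<forall>v. ereal t * g u + ereal ((norm (u - z))\<^sup>2 / 2) \<le> ereal t * g v + ereal ((norm (v - z))\<^sup>2 / 2))" for u
  obtain p0 where p0: "p0 \<in> Dom" "\<forall>v\<in>Dom. t * G p0 + (norm (p0 - z))\<^sup>2 / 2 \<le> t * G v + (norm (v - z))\<^sup>2 / 2"
    using prox_exists[OF minor] by blast
  have "Q p0" unfolding Q_def
  proof
    fix v
    show "ereal t * g p0 + ereal ((norm (p0 - z))\<^sup>2 / 2) \<le> ereal t * g v + ereal ((norm (v - z))\<^sup>2 / 2)"
    proof (cases "v \<in> Dom")
      case True
      then show ?thesis using p0 g_eq[OF True] g_eq[OF p0(1)] by simp
    next
      case False
      then have "g v = \<infinity>" unfolding Dom_def by simp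
      then show ?thesis using tpos by simp
    qed
  qed
  then have Qp: "Q p" unfolding p_def prox_def Q_def by (rule someI)
  obtain v0 where v0: "v0 \<in> Dom" using Dom_ne by auto
  have pD: "p \<in> Dom"
  proof (rule ccontr)
    assume "p \<notin> Dom"
    then have "g p = \<infinity>" unfolding Dom_def by simp
    then have "ereal t * g p + ereal ((norm (p - z))\<^sup>2 / 2) = \<infinity>" using tpos by simp
    moreover have "ereal t * g v0 + ereal ((norm (v0 - z))\<^sup>2 / 2) < \<infinity>" using g_eq[OF v0] by simp
    ultimately show False using Qp unfolding Q_def by (metis not_le)
  qed
  moreover have "\<forall>v\<in>Dom. t * G p + (norm (p - z))\<^sup>2 / 2 \<le> t * G v + (norm (v - z))\<^sup>2 / 2"
  proof
    fix v assume v: "v \<in> Dom"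
    have "ereal t * g p + ereal ((norm (p - z))\<^sup>2 / 2) \<le> ereal t * g v + ereal ((norm (v - z))\<^sup>2 / 2)"
      using Qp unfolding Q_def by blast
    then show "t * G p + (norm (p - z))\<^sup>2 / 2 \<le> t * G v + (norm (v - z))\<^sup>2 / 2"
      using g_eq[OF v] g_eq[OF pD] by simp
  qed
  ultimately show ?thesis by blast
qed
  then show ?thesis unfolding p_def Let_def by blast
qed

end

locale bs = proxsetup g t
  for g :: "'a::euclidean_space \<Rightarrow> ereal" and t :: real +
  fixes f :: "'a \<Rightarrow> real" and grad_f :: "'a \<Rightarrow> 'a" and L_f :: real
    and \<omega> :: "'a \<Rightarrow> real" and grad_\<omega> :: "'a \<Rightarrow> 'a" and \<sigma> L_\<omega> :: real and s :: real
  assumes f_convex: "convex_on UNIV f"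
    and f_grad: "\<And>y. (f has_derivative (\<lambda>h. grad_f y \<bullet> h)) (at y)"
    and L_f_pos: "L_f > 0"
    and f_lip: "\<And>y z. norm (grad_f y - grad_f z) \<le> L_f * norm (y - z)"
    and Xne: "{y. \<forall>z. ereal (f y) + g y \<le> ereal (f z) + g z} \<noteq> {}"
    and \<sigma>_pos: "\<sigma> > 0"
    and \<omega>_sc: "strongly_convex_fun \<sigma> \<omega>"
    and \<omega>_grad: "\<And>y. (\<omega> has_derivative (\<lambda>h. grad_\<omega> y \<bullet> h)) (at y)"
    and L_\<omega>_pos: "L_\<omega> > 0"
    and \<omega>_lip: "\<And>y z. norm (grad_\<omega> y - grad_\<omega> z) \<le> L_\<omega> * norm (y - z)"
    and t_le: "t \<le> 1 / L_f"
    and s_range: "0 < s" "s \<le> 2 / (L_\<omega> + \<sigma>)"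
begin

definition Xs where "Xs = {y. \<forall>z. ereal (f y) + g y \<le> ereal (f z) + g z}"
definition T where "T u = prox (\<lambda>u. ereal t * g u) (u - t *\<^sub>R grad_f u)"
definition S where "S u = u - s *\<^sub>R grad_\<omega> u"
definition \<rho> where "\<rho> = \<bar>1 - s * \<sigma>\<bar>"

lemma Xs_ne: "Xs \<noteq> {}" using Xne unfolding Xs_def .

lemma Xs_char: "y \<in> Xs \<longleftrightarrow> y \<in> Dom \<and> (\<forall>z\<in>Dom. f y + G y \<le> f z + G z)"
proof
  assume y: "y \<in> Xs"
  obtain z0 where z0: "z0 \<in> Dom" using Dom_ne by auto
  have "ereal (f y) + g y \<le> ereal (f z0) + g z0" using y unfolding Xs_def by blast
  also have "\<dots> < \<infinity>" using g_eq[OF z0] by simp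
  finally have yD: "y \<in> Dom" unfolding Dom_def by auto
  moreover have "\<forall>z\<in>Dom. f y + G y \<le> f z + G z"
  proof
    fix z assume z: "z \<in> Dom"
    have "ereal (f y) + g y \<le> ereal (f z) + g z" using y unfolding Xs_def by blast
    then show "f y + G y \<le> f z + G z" using g_eq[OF z] g_eq[OF yD] by simp
  qed
  ultimately show "y \<in> Dom \<and> (\<forall>z\<in>Dom. f y + G y \<le> f z + G z)" by blast
next
  assume y: "y \<in> Dom \<and> (\<forall>z\<in>Dom. f y + G y \<le> f z + G z)"
  show "y \<in> Xs" unfolding Xs_def
  proof (safe)
    fix z
    show "ereal (f y) + g y \<le> ereal (f z) + g z"
    proof (cases "z \<in> Dom")
      case True then show ?thesis using y g_eq[OF True] g_eq[of y] by simp
    next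
      case False then have "g z = \<infinity>" unfolding Dom_def by simp
      then show ?thesis by simp
    qed
  qed
qed

lemma descent_f: "f z \<le> f y + grad_f y \<bullet> (z - y) + L_f / 2 * (norm (z - y))\<^sup>2"
  by (rule descent[OF f_grad lip_mono[OF f_lip]]) simp

lemma xstar_vi:
  assumes y: "y \<in> Xs" and u: "u \<in> Dom"
  shows "G y \<le> G u + grad_f y \<bullet> (u - y)"
proof -
  have yD: "y \<in> Dom" and ym: "\<And>z. z \<in> Dom \<Longrightarrow> f y + G y \<le> f z + G z" using y Xs_char by auto
  have "G y \<le> G u + grad_f y \<bullet> (u - y) + L_f / 2 * (norm (u - y))\<^sup>2 * \<tau>" if \<tau>: "0 < \<tau>" "\<tau> \<le> 1" for \<tau>
  proof -
    define v where "v = y + \<tau> *\<^sub>R (u - y)"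
    have v: "v \<in> Dom" "G v \<le> (1 - \<tau>) * G y + \<tau> * G u" using G_conv'[OF yD u] \<tau> unfolding v_def by auto
    have fv: "f v \<le> f y + \<tau> * (grad_f y \<bullet> (u - y)) + L_f / 2 * \<tau>\<^sup>2 * (norm (u - y))\<^sup>2"
      using descent_f[of v y] \<tau> unfolding v_def by (simp add: power_mult_distrib)
    have "f y + G y \<le> f v + G v" by (rule ym[OF v(1)])
    then have "\<tau> * G y \<le> \<tau> * (G u + grad_f y \<bullet> (u - y) + L_f / 2 * (norm (u - y))\<^sup>2 * \<tau>)"
      using v(2) fv by (simp add: algebra_simps power2_eq_square)
    then show ?thesis using \<tau> by simp
  qed
  then show ?thesis by (rule limit_tau)
qed

lemma minorant: "\<exists>c q. \<forall>u. ereal (c + q \<bullet> u) \<le> g u"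
proof -
  obtain y where y: "y \<in> Xs" using Xs_ne by auto
  have yD: "y \<in> Dom" using y Xs_char by auto
  have "ereal ((G y + grad_f y \<bullet> y) + (- grad_f y) \<bullet> u) \<le> g u" for u
  proof (cases "u \<in> Dom")
    case True
    have "G y \<le> G u + grad_f y \<bullet> (u - y)" by (rule xstar_vi[OF y True])
    then show ?thesis using g_eq[OF True] by (simp add: inner_diff_right)
  next
    case False then have "g u = \<infinity>" unfolding Dom_def by simp
    then show ?thesis by simp
  qed
  then show ?thesis by blast
qed

lemma T_char: "T u \<in> Dom \<and> (\<forall>v\<in>Dom. t * G (T u) + (norm (T u - (u - t *\<^sub>R grad_f u)))\<^sup>2 / 2
   \<le> t * G v + (norm (v - (u - t *\<^sub>R grad_f u)))\<^sup>2 / 2)"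
proof -
  obtain c q where "\<forall>u. ereal (c + q \<bullet> u) \<le> g u" using minorant by blast
  from prox_char[of c q "u - t *\<^sub>R grad_f u"] this show ?thesis unfolding T_def Let_def by blast
qed

lemma T_dom: "T u \<in> Dom" using T_char by blast

lemma T_vi: "v \<in> Dom \<Longrightarrow> t * G v \<ge> t * G (T u) + ((u - t *\<^sub>R grad_f u) - T u) \<bullet> (v - T u)"
  using prox_vi[of "T u" "u - t *\<^sub>R grad_f u" v] T_char by blast

lemma T_nonexp: "norm (T u1 - T u2) \<le> norm (u1 - u2)"
proof -
  define p1 where "p1 = T u1"
  define p2 where "p2 = T u2"
  define z1 where "z1 = u1 - t *\<^sub>R grad_f u1"
  define z2 where "z2 = u2 - t *\<^sub>R grad_f u2"
  have 1: "t * G p2 \<ge> t * G p1 + (z1 - p1) \<bullet> (p2 - p1)"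
    unfolding p1_def p2_def z1_def by (rule T_vi[OF T_dom])
  have 2: "t * G p1 \<ge> t * G p2 + (z2 - p2) \<bullet> (p1 - p2)"
    unfolding p1_def p2_def z2_def by (rule T_vi[OF T_dom])
  have e: "(z1 - p1) \<bullet> (p2 - p1) + (z2 - p2) \<bullet> (p1 - p2) = (norm (p1 - p2))\<^sup>2 - (z1 - z2) \<bullet> (p1 - p2)"
  proof -
    have "(z1 - p1) \<bullet> (p2 - p1) + (z2 - p2) \<bullet> (p1 - p2) = (p1 - p2 - (z1 - z2)) \<bullet> (p1 - p2)"
      by (simp add: inner_diff_left inner_diff_right algebra_simps)
    also have "\<dots> = (norm (p1 - p2))\<^sup>2 - (z1 - z2) \<bullet> (p1 - p2)"
      by (simp add: inner_diff_left power2_norm_eq_inner)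
    finally show ?thesis .
  qed
  have "(norm (p1 - p2))\<^sup>2 \<le> (z1 - z2) \<bullet> (p1 - p2)" using 1 2 e by linarith
  also have "\<dots> \<le> norm (z1 - z2) * norm (p1 - p2)" by (rule norm_cauchy_schwarz)
  finally have "norm (p1 - p2) \<le> norm (z1 - z2)"
    by (cases "norm (p1 - p2) = 0") (auto simp: power2_eq_square)
  also have "norm (z1 - z2) \<le> norm (u1 - u2)" unfolding z1_def z2_def
  proof (rule grad_step_nonexp[OF f_convex f_grad L_f_pos f_lip])
    show "0 \<le> t" using tpos by simp
    have "t * L_f \<le> 1" using t_le L_f_pos by (simp add: field_simps)
    then show "t * L_f \<le> 2" by simp
  qed
  finally show ?thesis unfolding p1_def p2_def .
qed

lemma T_fix: "T y = y \<longleftrightarrow> y \<in> Xs"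
proof
  assume Ty: "T y = y"
  have yD: "y \<in> Dom" using T_dom[of y] Ty by simp
  have "f y + G y \<le> f v + G v" if v: "v \<in> Dom" for v
  proof -
    have "t * G v \<ge> t * G y + (- t *\<^sub>R grad_f y) \<bullet> (v - y)" using T_vi[OF v, of y] Ty by simp
    then have "t * G v \<ge> t * (G y - grad_f y \<bullet> (v - y))" by (simp add: algebra_simps)
    then have "G v \<ge> G y - grad_f y \<bullet> (v - y)" using tpos by simp
    moreover have "f v \<ge> f y + grad_f y \<bullet> (v - y)" by (rule grad_ineq_convex[OF f_convex f_grad])
    ultimately show ?thesis by linarith
  qed
  then show "y \<in> Xs" using yD Xs_char by blast
next
  assume y: "y \<in> Xs"
  define p where "p = T y"
  have pD: "p \<in> Dom" unfolding p_def by (rule T_dom)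
  have yD: "y \<in> Dom" using y Xs_char by auto
  have 1: "t * G y \<ge> t * G p + ((y - t *\<^sub>R grad_f y) - p) \<bullet> (y - p)" unfolding p_def by (rule T_vi[OF yD])
  have 2: "G y \<le> G p + grad_f y \<bullet> (p - y)" by (rule xstar_vi[OF y pD])
  have e: "((y - t *\<^sub>R grad_f y) - p) \<bullet> (y - p) = (norm (y - p))\<^sup>2 + t * (grad_f y \<bullet> (p - y))"
  proof -
    have "((y - t *\<^sub>R grad_f y) - p) \<bullet> (y - p) = (y - p) \<bullet> (y - p) - t * (grad_f y \<bullet> (y - p))"
      by (simp add: inner_diff_left)
    moreover have "grad_f y \<bullet> (y - p) = - (grad_f y \<bullet> (p - y))" by (simp add: inner_diff_right)
    ultimately show ?thesis by (simp add: power2_norm_eq_inner)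
  qed
  have "t * G y \<le> t * (G p + grad_f y \<bullet> (p - y))" using 2 tpos by simp
  also have "\<dots> = t * G p + t * (grad_f y \<bullet> (p - y))" by (rule distrib_left)
  finally have "(norm (y - p))\<^sup>2 \<le> 0" using 1 e by linarith
  then show "T y = y" unfolding p_def by simp
qed

lemma rho_lt1: "\<rho> < 1" and rho_ge0: "\<rho> \<ge> 0"
proof -
  have "s * \<sigma> > 0" using s_range \<sigma>_pos by simp
  moreover have "s * \<sigma> < 2"
  proof -
    have "s * \<sigma> \<le> 2 / (L_\<omega> + \<sigma>) * \<sigma>" using s_range \<sigma>_pos by (intro mult_right_mono) auto
    also have "\<dots> < 2" using L_\<omega>_pos \<sigma>_pos by (simp add: field_simps)
    finally show ?thesis .
  qed
  ultimately show "\<rho> < 1" unfolding \<rho>_def by linarith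
  show "\<rho> \<ge> 0" unfolding \<rho>_def by simp
qed

lemma S_contr: "norm (S u - S v) \<le> \<rho> * norm (u - v)"
  unfolding S_def \<rho>_def by (rule omega_contract[OF \<omega>_sc \<omega>_grad \<sigma>_pos L_\<omega>_pos \<omega>_lip s_range])

end

context bs begin

lemma sc_grad_ineq: "\<omega> y \<ge> \<omega> y0 + grad_\<omega> y0 \<bullet> (y - y0) + \<sigma> / 2 * (norm (y - y0))\<^sup>2"
proof -
  define \<phi> where "\<phi> = (\<lambda>y. \<omega> y - \<sigma> / 2 * (y \<bullet> y))"
  define H where "H = (\<lambda>y. grad_\<omega> y - \<sigma> *\<^sub>R y)"
  have cv: "convex_on UNIV \<phi>" unfolding \<phi>_def by (rule sc_phi_convex[OF \<omega>_sc])
  have dH: "(\<phi> has_derivative (\<lambda>h. H y \<bullet> h)) (at y)" for y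
  proof -
    have a: "((\<lambda>y. \<sigma> / 2 * (y \<bullet> y)) has_derivative (\<lambda>h. \<sigma> / 2 * (h \<bullet> y + y \<bullet> h))) (at y)"
      by (intro derivative_eq_intros) auto
    have "(\<phi> has_derivative (\<lambda>h. grad_\<omega> y \<bullet> h - \<sigma> / 2 * (h \<bullet> y + y \<bullet> h))) (at y)"
      unfolding \<phi>_def using has_derivative_diff[OF \<omega>_grad a] by simp
    moreover have "(\<lambda>h. grad_\<omega> y \<bullet> h - \<sigma> / 2 * (h \<bullet> y + y \<bullet> h)) = (\<lambda>h. H y \<bullet> h)"
      by (auto simp: H_def inner_diff_left inner_commute algebra_simps)
    ultimately show ?thesis by simp
  qed
  have "\<phi> y \<ge> \<phi> y0 + H y0 \<bullet> (y - y0)" by (rule grad_ineq_convex[OF cv dH])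
  then have 1: "\<omega> y - \<sigma> / 2 * (y \<bullet> y) \<ge> \<omega> y0 - \<sigma> / 2 * (y0 \<bullet> y0) + grad_\<omega> y0 \<bullet> (y - y0) - \<sigma> * (y0 \<bullet> (y - y0))"
    unfolding \<phi>_def H_def by (simp add: inner_diff_left)
  have 2: "(norm (y - y0))\<^sup>2 = y \<bullet> y - y0 \<bullet> y0 - 2 * (y0 \<bullet> (y - y0))"
    by (simp add: power2_norm_eq_inner inner_diff_left inner_diff_right inner_commute)
  have "\<sigma> / 2 * (norm (y - y0))\<^sup>2 = \<sigma> / 2 * (y \<bullet> y) - \<sigma> / 2 * (y0 \<bullet> y0) - \<sigma> * (y0 \<bullet> (y - y0))"
    unfolding 2 by (simp add: algebra_simps)
  then show ?thesis using 1 by linarith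
qed

lemma descent_\<omega>: "\<omega> z \<le> \<omega> y + grad_\<omega> y \<bullet> (z - y) + L_\<omega> / 2 * (norm (z - y))\<^sup>2"
  by (rule descent[OF \<omega>_grad lip_mono[OF \<omega>_lip]]) simp

lemma T_cont: "continuous_on UNIV T"
  unfolding continuous_on_iff
  by (metis T_nonexp dist_norm order_le_less_trans)

lemma Xs_closed: "closed Xs"
proof -
  have "Xs = {y. T y = id y}" using T_fix by auto
  then show ?thesis using closed_Collect_eq[OF T_cont continuous_on_id] by simp
qed

lemma Xs_convex:
  assumes y: "y \<in> Xs" and z: "z \<in> Xs" and \<tau>: "0 \<le> \<tau>" "\<tau> \<le> 1"
  shows "y + \<tau> *\<^sub>R (z - y) \<in> Xs"
proof -
  have yD: "y \<in> Dom" and ym: "\<And>v. v \<in> Dom \<Longrightarrow> f y + G y \<le> f v + G v" using y Xs_char by auto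
  have zD: "z \<in> Dom" and zm: "\<And>v. v \<in> Dom \<Longrightarrow> f z + G z \<le> f v + G v" using z Xs_char by auto
  define m where "m = y + \<tau> *\<^sub>R (z - y)"
  have m: "m \<in> Dom" "G m \<le> (1 - \<tau>) * G y + \<tau> * G z" using G_conv'[OF yD zD \<tau>] unfolding m_def by auto
  have "m = (1 - \<tau>) *\<^sub>R y + \<tau> *\<^sub>R z" unfolding m_def by (simp add: algebra_simps)
  then have fm: "f m \<le> (1 - \<tau>) * f y + \<tau> * f z" using convex_onD[OF f_convex, of \<tau> y z] \<tau> by simp
  have eq: "f y + G y = f z + G z" using ym[OF zD] zm[OF yD] by linarith
  have "f m + G m \<le> (1 - \<tau>) * (f y + G y) + \<tau> * (f z + G z)" using fm m(2) by (simp add: algebra_simps)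
  also have "\<dots> = f y + G y" using eq by (simp add: algebra_simps)
  finally have "\<forall>v\<in>Dom. f m + G m \<le> f v + G v" using ym by force
  then show ?thesis using m(1) Xs_char unfolding m_def by blast
qed

lemma \<omega>_cont: "continuous_on UNIV \<omega>"
  using \<omega>_grad has_derivative_continuous continuous_at_imp_continuous_on by blast

lemma exists_min: "\<exists>xs\<in>Xs. \<forall>y\<in>Xs. \<omega> xs \<le> \<omega> y"
proof -
  obtain y0 where y0: "y0 \<in> Xs" using Xs_ne by auto
  define R where "R = 2 * norm (grad_\<omega> y0) / \<sigma> + 1"
  define K where "K = Xs \<inter> cball y0 R"
  have "compact K" unfolding K_def using Xs_closed by (intro closed_Int_compact) auto
  moreover have "K \<noteq> {}" unfolding K_def R_def using y0 \<sigma>_pos by auto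
  moreover have "continuous_on K \<omega>" using \<omega>_cont continuous_on_subset by blast
  ultimately obtain xs where xs: "xs \<in> K" "\<forall>y\<in>K. \<omega> xs \<le> \<omega> y" using continuous_attains_inf by blast
  have "\<omega> xs \<le> \<omega> y" if y: "y \<in> Xs" for y
  proof (cases "y \<in> cball y0 R")
    case True then show ?thesis using xs y unfolding K_def by auto
  next
    case False
    define r where "r = norm (y - y0)"
    have r: "r > R" using False unfolding r_def by (simp add: dist_norm norm_minus_commute)
    have "\<omega> y \<ge> \<omega> y0 + grad_\<omega> y0 \<bullet> (y - y0) + \<sigma> / 2 * r\<^sup>2" unfolding r_def by (rule sc_grad_ineq)
    moreover have "grad_\<omega> y0 \<bullet> (y - y0) \<ge> - (norm (grad_\<omega> y0) * r)"
      using norm_cauchy_schwarz[of "- grad_\<omega> y0" "y - y0"] unfolding r_def by simp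
    moreover have "\<sigma> / 2 * r\<^sup>2 \<ge> norm (grad_\<omega> y0) * r"
    proof -
      have "\<sigma> / 2 * r \<ge> norm (grad_\<omega> y0)" using r \<sigma>_pos unfolding R_def by (simp add: field_simps)
      then have "\<sigma> / 2 * r * r \<ge> norm (grad_\<omega> y0) * r"
        by (intro mult_right_mono) (simp_all add: r_def)
      then show ?thesis by (simp add: power2_eq_square mult.assoc)
    qed
    ultimately have "\<omega> y \<ge> \<omega> y0" by linarith
    moreover have "\<omega> xs \<le> \<omega> y0" using xs y0 \<sigma>_pos unfolding K_def R_def by auto
    ultimately show ?thesis by linarith
  qed
  then show ?thesis using xs unfolding K_def by blast
qed

lemma min_vi:
  assumes xs: "xs \<in> Xs" and m: "\<forall>y\<in>Xs. \<omega> xs \<le> \<omega> y" and y: "y \<in> Xs"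
  shows "grad_\<omega> xs \<bullet> (y - xs) \<ge> 0"
proof -
  have "0 \<le> grad_\<omega> xs \<bullet> (y - xs) + L_\<omega> / 2 * (norm (y - xs))\<^sup>2 * \<tau>" if \<tau>: "0 < \<tau>" "\<tau> \<le> 1" for \<tau>
  proof -
    define v where "v = xs + \<tau> *\<^sub>R (y - xs)"
    have "v \<in> Xs" unfolding v_def using Xs_convex[OF xs y] \<tau> by auto
    then have "\<omega> xs \<le> \<omega> v" using m by blast
    also have "\<dots> \<le> \<omega> xs + \<tau> * (grad_\<omega> xs \<bullet> (y - xs)) + L_\<omega> / 2 * \<tau>\<^sup>2 * (norm (y - xs))\<^sup>2"
      using descent_\<omega>[of v xs] \<tau> unfolding v_def by (simp add: power_mult_distrib)
    finally have "0 \<le> \<tau> * (grad_\<omega> xs \<bullet> (y - xs) + L_\<omega> / 2 * (norm (y - xs))\<^sup>2 * \<tau>)"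
      by (simp add: algebra_simps power2_eq_square)
    then show ?thesis using \<tau> by (simp add: zero_le_mult_iff)
  qed
  then show ?thesis by (rule limit_tau)
qed

end

lemma xu_lemma:
  fixes a \<gamma> \<delta> :: "nat \<Rightarrow> real"
  assumes a0: "\<And>k. a k \<ge> 0"
    and \<gamma>: "\<And>k. 0 < \<gamma> k" "\<And>k. \<gamma> k \<le> 1"
    and ns: "\<not> summable \<gamma>"
    and \<delta>: "\<And>\<epsilon>. \<epsilon> > 0 \<Longrightarrow> eventually (\<lambda>k. \<delta> k \<le> \<epsilon>) sequentially"
    and rec: "\<And>k. a (Suc k) \<le> (1 - \<gamma> k) * a k + \<gamma> k * \<delta> k"
  shows "a \<longlonglongrightarrow> 0"
proof (rule order_tendstoI)
  fix e :: real assume "e < 0"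
  then show "eventually (\<lambda>k. e < a k) sequentially" using a0 by (intro always_eventually allI) (blast intro: order_less_le_trans)
next
  fix e :: real assume e: "0 < e"
  define \<epsilon> where "\<epsilon> = e / 2"
  have \<epsilon>: "\<epsilon> > 0" unfolding \<epsilon>_def using e by simp
  obtain N where N: "\<And>k. k \<ge> N \<Longrightarrow> \<delta> k \<le> \<epsilon>" using \<delta>[OF \<epsilon>] unfolding eventually_sequentially by blast
  define b where "b k = max (a k - \<epsilon>) 0" for k
  have b0: "b k \<ge> 0" for k unfolding b_def by simp
  have bstep: "b (Suc k) \<le> b k - \<gamma> k * b k" if k: "k \<ge> N" for k
  proof -
    have "a (Suc k) - \<epsilon> \<le> (1 - \<gamma> k) * a k + \<gamma> k * \<epsilon> - \<epsilon>"
      using rec[of k] N[OF k] \<gamma>[of k] by (smt (verit) mult_left_mono)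
    also have "\<dots> = (1 - \<gamma> k) * (a k - \<epsilon>)" by (simp add: algebra_simps)
    also have "\<dots> \<le> (1 - \<gamma> k) * b k" using \<gamma>(2)[of k] unfolding b_def by (intro mult_left_mono) auto
    finally have "a (Suc k) - \<epsilon> \<le> (1 - \<gamma> k) * b k" .
    moreover have "0 \<le> (1 - \<gamma> k) * b k" using \<gamma>(2)[of k] b0[of k] by simp
    ultimately have "b (Suc k) \<le> (1 - \<gamma> k) * b k" unfolding b_def by simp
    then show ?thesis by (simp add: algebra_simps)
  qed
  have bmono: "b (Suc k) \<le> b k" if "k \<ge> N" for k
    using bstep[OF that] \<gamma>(1)[of k] b0[of k] by (smt (verit) mult_nonneg_nonneg)
  have "\<exists>k\<ge>N. b k < \<epsilon>"
  proof (rule ccontr)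
    assume "\<not> ?thesis"
    then have big: "\<And>k. k \<ge> N \<Longrightarrow> b k \<ge> \<epsilon>" by force
    have ind: "b (N + n) \<le> b N - \<epsilon> * (\<Sum>i<n. \<gamma> (i + N))" for n
    proof (induction n)
      case 0 then show ?case by simp
    next
      case (Suc n)
      have "b (N + Suc n) \<le> b (N + n) - \<gamma> (N + n) * b (N + n)" using bstep[of "N + n"] by simp
      also have "\<gamma> (N + n) * b (N + n) \<ge> \<gamma> (N + n) * \<epsilon>"
        using big[of "N + n"] \<gamma>(1)[of "N + n"] by (intro mult_left_mono) auto
      then have "b (N + n) - \<gamma> (N + n) * b (N + n) \<le> b (N + n) - \<gamma> (N + n) * \<epsilon>" by simp
      finally show ?case using Suc.IH by (simp add: algebra_simps add.commute)
    qed
    have "(\<Sum>i<n. \<gamma> (i + N)) \<le> b N / \<epsilon>" for n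
    proof -
      have "\<epsilon> * (\<Sum>i<n. \<gamma> (i + N)) \<le> b N" using ind[of n] b0[of "N + n"] by linarith
      then show ?thesis using \<epsilon> by (simp add: field_simps mult.commute)
    qed
    then have "summable (\<lambda>i. \<gamma> (i + N))"
      by (intro summableI_nonneg_bounded[where x="b N / \<epsilon>"]) (use \<gamma>(1) in \<open>auto simp: less_imp_le\<close>)
    then show False using ns by simp
  qed
  then obtain k0 where k0: "k0 \<ge> N" "b k0 < \<epsilon>" by blast
  have "b (k0 + n) < \<epsilon>" for n
  proof (induction n)
    case 0 then show ?case using k0 by simp
  next
    case (Suc n) then show ?case using bmono[of "k0 + n"] k0 by simp
  qed
  then have "\<forall>j\<ge>k0. b j < \<epsilon>" by (metis le_add_diff_inverse)
  then have "\<forall>j\<ge>k0. a j < e" unfolding b_def \<epsilon>_def by (smt (verit) field_sum_of_halves)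
  then show "eventually (\<lambda>k. a k < e) sequentially" unfolding eventually_sequentially by blast
qed

locale bsseq = bs +
  fixes \<alpha> :: "nat \<Rightarrow> real" and x :: "nat \<Rightarrow> 'a"
  assumes \<alpha>_range: "\<And>k. k \<ge> 1 \<Longrightarrow> 0 < \<alpha> k \<and> \<alpha> k \<le> 1"
    and \<alpha>_lim: "\<alpha> \<longlonglongrightarrow> 0"
    and \<alpha>_sum: "\<not> summable (\<lambda>k. \<alpha> (Suc k))"
    and \<alpha>_ratio: "(\<lambda>k. \<alpha> (Suc (Suc k)) / \<alpha> (Suc k)) \<longlonglongrightarrow> 1"
    and iter: "\<And>k. k \<ge> 1 \<Longrightarrow>
       x k = \<alpha> k *\<^sub>R (x (k - 1) - s *\<^sub>R grad_\<omega> (x (k - 1)))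
           + (1 - \<alpha> k) *\<^sub>R prox (\<lambda>u. ereal t * g u) (x (k - 1) - t *\<^sub>R grad_f (x (k - 1)))"
begin

lemma xrec: "x (Suc k) = \<alpha> (Suc k) *\<^sub>R S (x k) + (1 - \<alpha> (Suc k)) *\<^sub>R T (x k)"
  using iter[of "Suc k"] unfolding S_def T_def by simp

lemma apos: "0 < \<alpha> (Suc k)" and ale1: "\<alpha> (Suc k) \<le> 1"
  using \<alpha>_range[of "Suc k"] by auto

lemma main: "\<exists>xs\<in>Xs. x \<longlonglongrightarrow> xs \<and> (\<forall>y\<in>Xs. grad_\<omega> xs \<bullet> (y - xs) \<ge> 0) \<and> (\<forall>y\<in>Xs. \<omega> xs \<le> \<omega> y)"
proof -
  obtain xs where xs: "xs \<in> Xs" and xmin: "\<forall>y\<in>Xs. \<omega> xs \<le> \<omega> y" using exists_min by blast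
  have vi: "\<And>y. y \<in> Xs \<Longrightarrow> grad_\<omega> xs \<bullet> (y - xs) \<ge> 0" using min_vi[OF xs xmin] by blast
  have Txs: "T xs = xs" using T_fix xs by blast
  define w where "w = S xs - xs"
  have r1: "1 - \<rho> > 0" using rho_lt1 by simp
  define B where "B = max (norm (x 0 - xs)) (norm w / (1 - \<rho>))"
  have wB: "norm w \<le> (1 - \<rho>) * B"
  proof -
    have "norm w / (1 - \<rho>) \<le> B" unfolding B_def by simp
    then show ?thesis using r1 by (simp add: field_simps)
  qed
  have SB: "norm (S u - xs) \<le> B" if "norm (u - xs) \<le> B" for u
  proof -
    have "norm (S u - xs) \<le> norm (S u - S xs) + norm w" unfolding w_def
      using norm_triangle_ineq[of "S u - S xs" "S xs - xs"] by simp
    also have "norm (S u - S xs) \<le> \<rho> * B"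
      using S_contr[of u xs] that rho_ge0 by (meson mult_left_mono order_trans)
    finally show ?thesis using wB by (simp add: algebra_simps)
  qed
  have TB: "norm (T u - xs) \<le> B" if "norm (u - xs) \<le> B" for u
    using T_nonexp[of u xs] that Txs by simp
  have bnd: "norm (x k - xs) \<le> B" for k
  proof (induction k)
    case 0 then show ?case unfolding B_def by simp
  next
    case (Suc k)
    have "x (Suc k) - xs = \<alpha> (Suc k) *\<^sub>R (S (x k) - xs) + (1 - \<alpha> (Suc k)) *\<^sub>R (T (x k) - xs)"
      unfolding xrec by (simp add: algebra_simps)
    then have "norm (x (Suc k) - xs) \<le> \<alpha> (Suc k) * norm (S (x k) - xs) + (1 - \<alpha> (Suc k)) * norm (T (x k) - xs)"
      using apos[of k] ale1[of k] norm_triangle_ineq[of "\<alpha> (Suc k) *\<^sub>R (S (x k) - xs)" "(1 - \<alpha> (Suc k)) *\<^sub>R (T (x k) - xs)"]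
      by simp
    also have "\<dots> \<le> \<alpha> (Suc k) * B + (1 - \<alpha> (Suc k)) * B"
      using SB[OF Suc.IH] TB[OF Suc.IH] apos[of k] ale1[of k] by (intro add_mono mult_left_mono) auto
    finally show ?case by (simp add: algebra_simps)
  qed
  define M where "M = 2 * B"
  have STM: "norm (S (x k) - T (x k)) \<le> M" for k
  proof -
    have "norm (S (x k) - T (x k)) \<le> norm (S (x k) - xs) + norm (T (x k) - xs)"
      using norm_triangle_ineq4[of "S (x k) - xs" "T (x k) - xs"] by simp
    then show ?thesis using SB[OF bnd[of k]] TB[OF bnd[of k]] unfolding M_def by linarith
  qed
  have M0: "M \<ge> 0" using STM[of 0] norm_ge_zero order_trans by blast
  define c where "c k = norm (x (Suc k) - x k)" for k
  define \<gamma> where "\<gamma> k = (1 - \<rho>) * \<alpha> (Suc (Suc k))" for k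
  define \<delta> where "\<delta> k = \<bar>\<alpha> (Suc (Suc k)) - \<alpha> (Suc k)\<bar> * M / \<gamma> k" for k
  have \<gamma>pos: "0 < \<gamma> k" "\<gamma> k \<le> 1" for k
  proof -
    show "0 < \<gamma> k" unfolding \<gamma>_def using r1 apos by simp
    have "(1 - \<rho>) * \<alpha> (Suc (Suc k)) \<le> 1 * 1" using rho_ge0 rho_lt1 apos ale1
      by (intro mult_mono) (auto simp: less_imp_le)
    then show "\<gamma> k \<le> 1" unfolding \<gamma>_def by simp
  qed
  have crec: "c (Suc k) \<le> (1 - \<gamma> k) * c k + \<gamma> k * \<delta> k" for k
  proof -
    define a1 where "a1 = \<alpha> (Suc k)"
    define a2 where "a2 = \<alpha> (Suc (Suc k))"
    have E: "x (Suc (Suc k)) - x (Suc k) = a2 *\<^sub>R (S (x (Suc k)) - S (x k)) + (1 - a2) *\<^sub>R (T (x (Suc k)) - T (x k))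
         + (a2 - a1) *\<^sub>R (S (x k) - T (x k))"
      unfolding a1_def a2_def xrec[of "Suc k"] xrec[of k] by (simp add: algebra_simps)
    have "c (Suc k) \<le> norm (a2 *\<^sub>R (S (x (Suc k)) - S (x k))) + norm ((1 - a2) *\<^sub>R (T (x (Suc k)) - T (x k)))
         + norm ((a2 - a1) *\<^sub>R (S (x k) - T (x k)))"
      unfolding c_def E using norm_triangle_ineq[of "a2 *\<^sub>R (S (x (Suc k)) - S (x k)) + (1 - a2) *\<^sub>R (T (x (Suc k)) - T (x k))" "(a2 - a1) *\<^sub>R (S (x k) - T (x k))"]
        norm_triangle_ineq[of "a2 *\<^sub>R (S (x (Suc k)) - S (x k))" "(1 - a2) *\<^sub>R (T (x (Suc k)) - T (x k))"]
      by linarith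
    also have "norm (a2 *\<^sub>R (S (x (Suc k)) - S (x k))) \<le> a2 * (\<rho> * c k)"
      using apos S_contr unfolding a2_def c_def by (simp add: mult_left_mono less_imp_le)
    also have "norm ((1 - a2) *\<^sub>R (T (x (Suc k)) - T (x k))) \<le> (1 - a2) * c k"
      using ale1 T_nonexp unfolding a2_def c_def by (simp add: mult_left_mono)
    also have "norm ((a2 - a1) *\<^sub>R (S (x k) - T (x k))) \<le> \<bar>a2 - a1\<bar> * M"
      using STM by (simp add: mult_left_mono)
    also have "\<bar>a2 - a1\<bar> * M = \<gamma> k * \<delta> k"
      unfolding \<delta>_def a1_def a2_def using \<gamma>pos(1)[of k] by simp
    finally show ?thesis unfolding \<gamma>_def a2_def by (simp add: algebra_simps)
  qed
  have \<gamma>ns: "\<not> summable \<gamma>"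
  proof
    assume "summable \<gamma>"
    then have "summable (\<lambda>k. \<gamma> k / (1 - \<rho>))" by (rule summable_divide)
    then have "summable (\<lambda>k. \<alpha> (Suc (Suc k)))" unfolding \<gamma>_def using r1 by simp
    then show False using \<alpha>_sum summable_Suc_iff[of "\<lambda>k. \<alpha> (Suc k)"] by simp
  qed
  have \<delta>lim: "\<delta> \<longlonglongrightarrow> 0"
  proof -
    have inv: "(\<lambda>k. inverse (\<alpha> (Suc (Suc k)) / \<alpha> (Suc k))) \<longlonglongrightarrow> inverse 1"
      by (rule tendsto_inverse[OF \<alpha>_ratio]) simp
    have "(\<lambda>k. M / (1 - \<rho>) * \<bar>1 - inverse (\<alpha> (Suc (Suc k)) / \<alpha> (Suc k))\<bar>) \<longlonglongrightarrow> M / (1 - \<rho>) * \<bar>1 - inverse 1\<bar>"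
      by (intro tendsto_intros inv)
    moreover have dk: "\<delta> k = M / (1 - \<rho>) * \<bar>1 - inverse (\<alpha> (Suc (Suc k)) / \<alpha> (Suc k))\<bar>" for k
    proof -
      have p1: "\<alpha> (Suc k) > 0" and p2: "\<alpha> (Suc (Suc k)) > 0" using apos by auto
      have "\<bar>1 - inverse (\<alpha> (Suc (Suc k)) / \<alpha> (Suc k))\<bar> = \<bar>\<alpha> (Suc (Suc k)) - \<alpha> (Suc k)\<bar> / \<alpha> (Suc (Suc k))"
        using p1 p2 by (simp add: field_simps abs_div_pos del: abs_divide)
      then show ?thesis unfolding \<delta>_def \<gamma>_def using r1 p2 by (simp add: field_simps)
    qed
    moreover have "\<delta> = (\<lambda>k. M / (1 - \<rho>) * \<bar>1 - inverse (\<alpha> (Suc (Suc k)) / \<alpha> (Suc k))\<bar>)"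
      by (rule ext) (rule dk)
    ultimately show ?thesis by simp
  qed
  have \<delta>ev: "eventually (\<lambda>k. \<delta> k \<le> \<epsilon>) sequentially" if "\<epsilon> > 0" for \<epsilon>
    by (rule eventually_mono[OF order_tendstoD(2)[OF \<delta>lim that]]) simp
  have c0: "c \<longlonglongrightarrow> 0"
    by (rule xu_lemma[OF _ \<gamma>pos \<gamma>ns \<delta>ev crec]) (simp add: c_def)
  have dlim: "(\<lambda>k. x k - T (x k)) \<longlonglongrightarrow> 0"
  proof -
    have lim1: "(\<lambda>k. c k + \<alpha> (Suc k) * M) \<longlonglongrightarrow> 0 + 0 * M"
      by (rule tendsto_add[OF c0 tendsto_mult[OF LIMSEQ_Suc[OF \<alpha>_lim] tendsto_const]])
    have bd: "norm (x k - T (x k)) \<le> c k + \<alpha> (Suc k) * M" for k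
    proof -
      have e: "x (Suc k) - T (x k) = \<alpha> (Suc k) *\<^sub>R (S (x k) - T (x k))"
        by (subst xrec) (simp add: scaleR_diff_right scaleR_diff_left)
      have n1: "norm (x (Suc k) - T (x k)) \<le> \<alpha> (Suc k) * M"
        unfolding e norm_scaleR using apos[of k] STM[of k] by (simp add: mult_left_mono)
      have e2: "x k - T (x k) = (x (Suc k) - T (x k)) - (x (Suc k) - x k)" by simp
      have n2: "norm (x k - T (x k)) \<le> norm (x (Suc k) - T (x k)) + norm (x (Suc k) - x k)"
        unfolding e2 by (rule norm_triangle_ineq4)
      show ?thesis using n1 n2 unfolding c_def by linarith
    qed
    have "(\<lambda>k. norm (x k - T (x k))) \<longlonglongrightarrow> 0"
    proof (rule tendsto_sandwich[of "\<lambda>_. 0" _ _ "\<lambda>k. c k + \<alpha> (Suc k) * M"])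
      show "eventually (\<lambda>k. 0 \<le> norm (x k - T (x k))) sequentially" by simp
      show "eventually (\<lambda>k. norm (x k - T (x k)) \<le> c k + \<alpha> (Suc k) * M) sequentially"
        using bd by simp
      show "(\<lambda>k. 0::real) \<longlonglongrightarrow> 0" by simp
      show "(\<lambda>k. c k + \<alpha> (Suc k) * M) \<longlonglongrightarrow> 0" using lim1 by simp
    qed
    then show ?thesis by (simp only: tendsto_norm_zero_iff)
  qed
  have ls: "eventually (\<lambda>k. w \<bullet> (x k - xs) \<le> \<epsilon>) sequentially" if \<epsilon>: "\<epsilon> > 0" for \<epsilon>
  proof (rule ccontr)
    assume "\<not> ?thesis"
    then have "frequently (\<lambda>k. \<not> w \<bullet> (x k - xs) \<le> \<epsilon>) sequentially" by (simp add: not_eventually)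
    then have "infinite {k. \<not> w \<bullet> (x k - xs) \<le> \<epsilon>}"
      using frequently_cofinite cofinite_eq_sequentially by metis
    then obtain r :: "nat \<Rightarrow> nat" where r: "strict_mono r" "\<And>n. r n \<in> {k. \<not> w \<bullet> (x k - xs) \<le> \<epsilon>}"
      using infinite_enumerate by blast
    have "bounded (range (x \<circ> r))"
      unfolding bounded_iff
      by (rule exI[of _ "norm xs + B"]) (auto intro: order_trans[OF norm_triangle_sub[of _ xs]] simp: bnd add_mono)
    then obtain z r2 where r2: "strict_mono r2" "((x \<circ> r) \<circ> r2) \<longlonglongrightarrow> z"
      using bounded_imp_convergent_subsequence by blast
    define q where "q = r \<circ> r2"
    have q: "strict_mono q" unfolding q_def using r(1) r2(1) by (rule strict_mono_o)
    have xq: "(\<lambda>n. x (q n)) \<longlonglongrightarrow> z" using r2(2) unfolding q_def o_def by simp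
    have "(\<lambda>n. T (x (q n))) \<longlonglongrightarrow> T z"
      using continuous_on_tendsto_compose[OF T_cont xq] by simp
    then have "(\<lambda>n. x (q n) - T (x (q n))) \<longlonglongrightarrow> z - T z" using xq by (intro tendsto_intros)
    moreover have "(\<lambda>n. x (q n) - T (x (q n))) \<longlonglongrightarrow> 0"
      using LIMSEQ_subseq_LIMSEQ[OF dlim q] unfolding o_def by simp
    ultimately have "z - T z = 0" by (rule LIMSEQ_unique)
    then have "T z = z" by simp
    then have "z \<in> Xs" using T_fix by blast
    then have "grad_\<omega> xs \<bullet> (z - xs) \<ge> 0" by (rule vi)
    then have wz: "w \<bullet> (z - xs) \<le> 0" unfolding w_def S_def using s_range by simp
    have "(\<lambda>n. w \<bullet> (x (q n) - xs)) \<longlonglongrightarrow> w \<bullet> (z - xs)" using xq by (intro tendsto_intros)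
    moreover have "\<epsilon> \<le> w \<bullet> (x (q n) - xs)" for n using r(2)[of "r2 n"] unfolding q_def by simp
    ultimately have "\<epsilon> \<le> w \<bullet> (z - xs)" by (intro tendsto_lowerbound) auto
    then show False using wz \<epsilon> by simp
  qed
  define a where "a k = (norm (x k - xs))\<^sup>2" for k
  define \<gamma>' where "\<gamma>' k = (1 - \<rho>) * \<alpha> (Suc k)" for k
  define \<delta>' where "\<delta>' k = 2 * (w \<bullet> (x (Suc k) - xs)) / (1 - \<rho>)" for k
  have \<gamma>'pos: "0 < \<gamma>' k" "\<gamma>' k \<le> 1" for k
  proof -
    show "0 < \<gamma>' k" unfolding \<gamma>'_def using r1 apos by simp
    have "(1 - \<rho>) * \<alpha> (Suc k) \<le> 1 * 1" using rho_ge0 rho_lt1 apos ale1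
      by (intro mult_mono) (auto simp: less_imp_le)
    then show "\<gamma>' k \<le> 1" unfolding \<gamma>'_def by simp
  qed
  have \<gamma>'ns: "\<not> summable \<gamma>'"
  proof
    assume "summable \<gamma>'"
    then have "summable (\<lambda>k. \<gamma>' k / (1 - \<rho>))" by (rule summable_divide)
    then have "summable (\<lambda>k. \<alpha> (Suc k))" unfolding \<gamma>'_def using r1 by simp
    then show False using \<alpha>_sum by simp
  qed
  have \<delta>'ev: "eventually (\<lambda>k. \<delta>' k \<le> \<epsilon>) sequentially" if "\<epsilon> > 0" for \<epsilon>
  proof -
    have "\<epsilon> * (1 - \<rho>) / 2 > 0" using that r1 by simp
    from ls[OF this] obtain N where N: "\<And>k. k \<ge> N \<Longrightarrow> w \<bullet> (x k - xs) \<le> \<epsilon> * (1 - \<rho>) / 2"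
      unfolding eventually_sequentially by blast
    have "\<delta>' k \<le> \<epsilon>" if "k \<ge> N" for k
      using N[of "Suc k"] that r1 unfolding \<delta>'_def by (simp add: field_simps)
    then show ?thesis unfolding eventually_sequentially by blast
  qed
  have arec: "a (Suc k) \<le> (1 - \<gamma>' k) * a k + \<gamma>' k * \<delta>' k" for k
  proof -
    define al where "al = \<alpha> (Suc k)"
    define u where "u = al *\<^sub>R (S (x k) - S xs) + (1 - al) *\<^sub>R (T (x k) - xs)"
    define n where "n = norm (x k - xs)"
    have al: "0 < al" "al \<le> 1" unfolding al_def using apos ale1 by auto
    have e1: "x (Suc k) - xs = u + al *\<^sub>R w"
      unfolding u_def w_def al_def xrec by (simp add: algebra_simps)
    have "norm u \<le> norm (al *\<^sub>R (S (x k) - S xs)) + norm ((1 - al) *\<^sub>R (T (x k) - xs))"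
      unfolding u_def by (rule norm_triangle_ineq)
    also have "norm (al *\<^sub>R (S (x k) - S xs)) \<le> al * (\<rho> * n)"
      using al S_contr unfolding n_def by (simp add: mult_left_mono)
    also have "norm ((1 - al) *\<^sub>R (T (x k) - xs)) \<le> (1 - al) * n"
      using al T_nonexp[of "x k" xs] Txs unfolding n_def by (simp add: mult_left_mono)
    finally have un: "norm u \<le> (1 - (1 - \<rho>) * al) * n" by (simp add: algebra_simps)
    have f0: "0 \<le> 1 - (1 - \<rho>) * al" and f1: "1 - (1 - \<rho>) * al \<le> 1"
    proof -
      have "(1 - \<rho>) * al \<le> 1 * 1" using rho_ge0 rho_lt1 al by (intro mult_mono) auto
      then show "0 \<le> 1 - (1 - \<rho>) * al" by simp
      show "1 - (1 - \<rho>) * al \<le> 1" using r1 al by simp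
    qed
    have "(norm u)\<^sup>2 \<le> ((1 - (1 - \<rho>) * al) * n)\<^sup>2"
      using un by (intro power_mono) auto
    also have "\<dots> = (1 - (1 - \<rho>) * al) * ((1 - (1 - \<rho>) * al) * n\<^sup>2)" by (simp add: power2_eq_square)
    also have "\<dots> \<le> (1 - (1 - \<rho>) * al) * n\<^sup>2"
      using f0 f1 by (intro mult_left_le_one_le) auto
    finally have u2: "(norm u)\<^sup>2 \<le> (1 - (1 - \<rho>) * al) * n\<^sup>2" .
    have "a (Suc k) = (norm u)\<^sup>2 + 2 * (u \<bullet> (al *\<^sub>R w)) + (norm (al *\<^sub>R w))\<^sup>2"
      unfolding a_def e1 by (rule nsq_add)
    also have "\<dots> \<le> (norm u)\<^sup>2 + 2 * ((al *\<^sub>R w) \<bullet> (u + al *\<^sub>R w))"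
    proof -
      have "(al *\<^sub>R w) \<bullet> (u + al *\<^sub>R w) = u \<bullet> (al *\<^sub>R w) + (norm (al *\<^sub>R w))\<^sup>2"
        unfolding inner_add_right power2_norm_eq_inner by (simp only: inner_commute)
      then show ?thesis by simp
    qed
    also have "(al *\<^sub>R w) \<bullet> (u + al *\<^sub>R w) = al * (w \<bullet> (x (Suc k) - xs))" unfolding e1 by simp
    finally have fin: "a (Suc k) \<le> (1 - (1 - \<rho>) * al) * n\<^sup>2 + 2 * (al * (w \<bullet> (x (Suc k) - xs)))" using u2 by simp
    have g': "(1 - \<rho>) * al = \<gamma>' k" by (simp add: \<gamma>'_def al_def)
    have n2: "n\<^sup>2 = a k" by (simp add: n_def a_def)
    have eq: "\<gamma>' k * \<delta>' k = 2 * (al * (w \<bullet> (x (Suc k) - xs)))"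
      unfolding \<gamma>'_def \<delta>'_def al_def using r1 by (simp add: field_simps)
    show ?thesis using fin unfolding g' n2 eq .
  qed
  have a0: "a \<longlonglongrightarrow> 0"
    by (rule xu_lemma[OF _ \<gamma>'pos \<gamma>'ns \<delta>'ev arec]) (simp add: a_def)
  have "(\<lambda>k. sqrt (a k)) \<longlonglongrightarrow> sqrt 0" by (intro tendsto_intros a0)
  then have "(\<lambda>k. norm (x k - xs)) \<longlonglongrightarrow> 0" unfolding a_def by simp
  then have "(\<lambda>k. x k - xs) \<longlonglongrightarrow> 0" by (simp add: tendsto_norm_zero_iff)
  then have "x \<longlonglongrightarrow> xs" by (simp add: LIM_zero_iff)
  then show ?thesis using xs xmin vi by blast
qed

end

context bsseq begin

lemma main2: "\<exists>xs\<in>Xs. x \<longlonglongrightarrow> xs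
           \<and> (\<forall>y\<in>Xs. grad_\<omega> xs \<bullet> (y - xs) \<ge> 0)
           \<and> (\<forall>y\<in>Xs. \<omega> xs \<le> \<omega> y)
           \<and> (\<forall>z\<in>Xs. (\<forall>y\<in>Xs. \<omega> z \<le> \<omega> y) \<longrightarrow> z = xs)"
proof -
  obtain xs where xs: "xs \<in> Xs" "x \<longlonglongrightarrow> xs" "\<forall>y\<in>Xs. grad_\<omega> xs \<bullet> (y - xs) \<ge> 0" "\<forall>y\<in>Xs. \<omega> xs \<le> \<omega> y"
    using main by blast
  have "z = xs" if z: "z \<in> Xs" "\<forall>y\<in>Xs. \<omega> z \<le> \<omega> y" for z
  proof -
    have "\<omega> z \<ge> \<omega> xs + grad_\<omega> xs \<bullet> (z - xs) + \<sigma> / 2 * (norm (z - xs))\<^sup>2" by (rule sc_grad_ineq)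
    moreover have "grad_\<omega> xs \<bullet> (z - xs) \<ge> 0" using xs(3) z(1) by blast
    moreover have "\<omega> z \<le> \<omega> xs" using z(2) xs(1) by blast
    ultimately have "\<sigma> / 2 * (norm (z - xs))\<^sup>2 \<le> 0" by linarith
    then have "(norm (z - xs))\<^sup>2 \<le> 0" using \<sigma>_pos by (simp add: mult_le_0_iff)
    then show ?thesis by simp
  qed
  then show ?thesis using xs by blast
qed

end

theorem proposition3p1:
  fixes f :: "'a::euclidean_space \<Rightarrow> real" and grad_f :: "'a \<Rightarrow> 'a" and L_f :: real
    and g :: "'a \<Rightarrow> ereal"
    and \<omega> :: "'a \<Rightarrow> real" and grad_\<omega> :: "'a \<Rightarrow> 'a" and \<sigma> L_\<omega> :: real
    and \<alpha> :: "nat \<Rightarrow> real" and t s :: real and x :: "nat \<Rightarrow> 'a"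
    and Xstar :: "'a set"
  assumes f_convex: "convex_on UNIV f"
    and f_grad: "\<And>y. (f has_derivative (\<lambda>h. grad_f y \<bullet> h)) (at y)"
    and f_grad_cont: "continuous_on UNIV grad_f"
    and L_f_pos: "L_f > 0"
    and f_lip: "\<And>y z. norm (grad_f y - grad_f z) \<le> L_f * norm (y - z)"
    and g_proper: "proper_fun g" and g_lsc: "lsc_fun g" and g_convex: "convex_ereal_fun g"
    and Xstar_def: "Xstar = {y. \<forall>z. ereal (f y) + g y \<le> ereal (f z) + g z}"
    and Xstar_ne: "Xstar \<noteq> {}"
    and \<sigma>_pos: "\<sigma> > 0"
    and \<omega>_sc: "strongly_convex_fun \<sigma> \<omega>"
    and \<omega>_grad: "\<And>y. (\<omega> has_derivative (\<lambda>h. grad_\<omega> y \<bullet> h)) (at y)"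
    and \<omega>_grad_cont: "continuous_on UNIV grad_\<omega>"
    and L_\<omega>_pos: "L_\<omega> > 0"
    and \<omega>_lip: "\<And>y z. norm (grad_\<omega> y - grad_\<omega> z) \<le> L_\<omega> * norm (y - z)"
    and \<alpha>_range: "\<And>k. k \<ge> 1 \<Longrightarrow> 0 < \<alpha> k \<and> \<alpha> k \<le> 1"
    and \<alpha>_lim: "\<alpha> \<longlonglongrightarrow> 0"
    and \<alpha>_sum: "\<not> summable (\<lambda>k. \<alpha> (Suc k))"
    and \<alpha>_ratio: "(\<lambda>k. \<alpha> (Suc (Suc k)) / \<alpha> (Suc k)) \<longlonglongrightarrow> 1"
    and t_range: "0 < t" "t \<le> 1 / L_f"
    and s_range: "0 < s" "s \<le> 2 / (L_\<omega> + \<sigma>)"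
    and iter: "\<And>k. k \<ge> 1 \<Longrightarrow>
       x k = \<alpha> k *\<^sub>R (x (k - 1) - s *\<^sub>R grad_\<omega> (x (k - 1)))
           + (1 - \<alpha> k) *\<^sub>R prox (\<lambda>u. ereal t * g u) (x (k - 1) - t *\<^sub>R grad_f (x (k - 1)))"
  shows "\<exists>xs\<in>Xstar. x \<longlonglongrightarrow> xs
           \<and> (\<forall>y\<in>Xstar. grad_\<omega> xs \<bullet> (y - xs) \<ge> 0)
           \<and> (\<forall>y\<in>Xstar. \<omega> xs \<le> \<omega> y)
           \<and> (\<forall>z\<in>Xstar. (\<forall>y\<in>Xstar. \<omega> z \<le> \<omega> y) \<longrightarrow> z = xs)"
proof -
  interpret bsseq g t f grad_f L_f \<omega> grad_\<omega> \<sigma> L_\<omega> s \<alpha> x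
  proof unfold_locales
    show "{y. \<forall>z. ereal (f y) + g y \<le> ereal (f z) + g z} \<noteq> {}" using Xstar_def Xstar_ne by simp
  qed (use assms in auto)
  have "Xs = Xstar" unfolding Xs_def Xstar_def ..
  then show ?thesis using main2 by simp
qed

end
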